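(* Let $k\ge2$, let $\mathcal{F}$ be a saturated foliation of normal degree $d$ on $\mathbb{P}^2_k=\mathbb{P}(1,1,k)$, let $\pi:\mathbb{F}_k\to\mathbb{P}^2_k$ be the minimal resolution of $p_2=[0:0:1]$ with exceptional divisor $E$, let $r$ be the algebraic multiplicity of $\mathcal{F}$ at $p_2$ and $\mathcal{G}=\pi^*\mathcal{F}$. Then $\mathcal{G}$ is a Riccati foliation with respect to the natural rational fibration and $E$ is $\mathcal{G}$-invariant if and only if $r=d-k$. In particular, when these equivalent conditions hold, $\mathcal{F}$ has an invariant line.
   Context: $\mathbb{P}(1,1,k)$ is the quotient of $\mathbb{C}^3\setminus\{0\}$ by $t\cdot(x_0,x_1,x_2)=(tx_0,tx_1,t^kx_2)$. A foliation of normal degree $d$ is the class of a nonzero 1-form $\omega=\sum A_idx_i$ with $A_0,A_1$ quasi-homogeneous (weights $1,1,k$) of degree $d-1$, $A_2$ of degree $d-k$, $x_0A_0+x_1A_1+kx_2A_2=0$; saturated means finitely many zeros. Lines are curves $\{ax_0+bx_1=0\}$; a curve $\{P=0\}$ is invariant if $\omega\wedge dP=P\Theta$ for a polynomial 2-form $\Theta$. $E=\pi^{-1}(p_2)$, $E^2=-k$; the natural rational fibration of $\mathbb{F}_k$ has as fibres the strict transforms of lines through $p_2$. Algebraic multiplicity $r$: writing $\eta=\omega|_{x_2=1}=\sum_s\eta_s$ in coordinates $(x,y)=(x_0,x_1)$ with $\eta_s=a_sdx+b_sdy$, $a_s,b_s$ homogeneous of degree $s-1$, $r=\min\{s:\eta_s\ne0\}$.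 Riccati: transverse to the general fibre. *)

theory Defs
  imports "HOL-Analysis.Analysis"
begin

type_synonym cfun3 = "complex \<Rightarrow> complex \<Rightarrow> complex \<Rightarrow> complex"
type_synonym cfun2 = "complex \<Rightarrow> complex \<Rightarrow> complex"

definition poly2 :: "cfun2 \<Rightarrow> bool" where
  "poly2 f \<longleftrightarrow> (\<exists>(c::nat \<Rightarrow> nat \<Rightarrow> complex) N. \<forall>x y.
      f x y = (\<Sum>i\<le>N. \<Sum>j\<le>N. c i j * x^i * y^j))"

definition poly3 :: "cfun3 \<Rightarrow> bool" where
  "poly3 f \<longleftrightarrow> (\<exists>(c::nat \<Rightarrow> nat \<Rightarrow> nat \<Rightarrow> complex) N. \<forall>x y z.
      f x y z = (\<Sum>a\<le>N. \<Sum>b\<le>N. \<Sum>e\<le>N. c a b e * x^a * y^b * z^e))"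

definition qhom :: "nat \<Rightarrow> int \<Rightarrow> cfun3 \<Rightarrow> bool" where
  "qhom k e A \<longleftrightarrow> (\<exists>coef :: nat \<Rightarrow> nat \<Rightarrow> nat \<Rightarrow> complex. \<forall>x y z.
      A x y z = (\<Sum>(a,b,c)\<in>{(a,b,c). int a + int b + int k * int c = e}.
                    coef a b c * x^a * y^b * z^c))"

text \<open>omega = A0 dx0 + A1 dx1 + A2 dx2 defines a foliation of normal degree d.\<close>
definition foliation_P11k :: "nat \<Rightarrow> int \<Rightarrow> cfun3 \<Rightarrow> cfun3 \<Rightarrow> cfun3 \<Rightarrow> bool" where
  "foliation_P11k k d A0 A1 A2 \<longleftrightarrow>
     (\<exists>x y z. A0 x y z \<noteq> 0 \<or> A1 x y z \<noteq> 0 \<or> A2 x y z \<noteq> 0) \<and>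
     qhom k (d - 1) A0 \<and> qhom k (d - 1) A1 \<and> qhom k (d - int k) A2 \<and>
     (\<forall>x y z. x * A0 x y z + y * A1 x y z + of_nat k * z * A2 x y z = 0)"

text \<open>Saturated: finitely many zeros in P(1,1,k), i.e. the common zero set in
  C^3 minus 0 is contained in finitely many weighted C^* orbits.\<close>
definition saturated_fol :: "nat \<Rightarrow> cfun3 \<Rightarrow> cfun3 \<Rightarrow> cfun3 \<Rightarrow> bool" where
  "saturated_fol k A0 A1 A2 \<longleftrightarrow> (\<exists>F :: (complex \<times> complex \<times> complex) set. finite F \<and>
     (\<forall>x0 x1 x2. (x0, x1, x2) \<noteq> (0, 0, 0) \<and> A0 x0 x1 x2 = 0 \<and> A1 x0 x1 x2 = 0 \<and> A2 x0 x1 x2 = 0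
        \<longrightarrow> (\<exists>(p0, p1, p2) \<in> F. \<exists>u. u \<noteq> 0 \<and> x0 = u * p0 \<and> x1 = u * p1 \<and> x2 = u^k * p2)))"

text \<open>Algebraic multiplicity at p2=[0:0:1]: eta = A0(x,y,1) dx + A1(x,y,1) dy,
  eta_s has coefficients homogeneous of degree s-1; r = min {s. eta_s \<noteq> 0}.\<close>
definition alg_mult_p2 :: "cfun3 \<Rightarrow> cfun3 \<Rightarrow> nat \<Rightarrow> bool" where
  "alg_mult_p2 A0 A1 r \<longleftrightarrow> (\<exists>(c0::nat \<Rightarrow> nat \<Rightarrow> complex) c1 N.
     (\<forall>i j. N < i \<or> N < j \<longrightarrow> c0 i j = 0 \<and> c1 i j = 0) \<and>
     (\<forall>x y. A0 x y 1 = (\<Sum>i\<le>N. \<Sum>j\<le>N. c0 i j * x^i * y^j)) \<and>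
     (\<forall>x y. A1 x y 1 = (\<Sum>i\<le>N. \<Sum>j\<le>N. c1 i j * x^i * y^j)) \<and>
     r = (LEAST s. 1 \<le> s \<and> (\<exists>i j. i + j + 1 = s \<and> (c0 i j \<noteq> 0 \<or> c1 i j \<noteq> 0))))"

definition pd3 :: "nat \<Rightarrow> cfun3 \<Rightarrow> cfun3" where
  "pd3 i F x0 x1 x2 = (if i = 0 then deriv (\<lambda>s. F s x1 x2) x0
                       else if i = 1 then deriv (\<lambda>s. F x0 s x2) x1
                       else deriv (\<lambda>s. F x0 x1 s) x2)"

text \<open>{P=0} invariant: omega wedge dP = P Theta, Theta a polynomial 2-form
  Theta01 dx0^dx1 + Theta02 dx0^dx2 + Theta12 dx1^dx2.\<close>
definition invariant_curve :: "cfun3 \<Rightarrow> cfun3 \<Rightarrow> cfun3 \<Rightarrow> cfun3 \<Rightarrow> bool" where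
  "invariant_curve A0 A1 A2 P \<longleftrightarrow> poly3 P \<and> (\<exists>x y z. P x y z \<noteq> 0) \<and>
    (\<exists>T01 T02 T12. poly3 T01 \<and> poly3 T02 \<and> poly3 T12 \<and> (\<forall>x y z.
       A0 x y z * pd3 1 P x y z - A1 x y z * pd3 0 P x y z = P x y z * T01 x y z \<and>
       A0 x y z * pd3 2 P x y z - A2 x y z * pd3 0 P x y z = P x y z * T02 x y z \<and>
       A1 x y z * pd3 2 P x y z - A2 x y z * pd3 1 P x y z = P x y z * T12 x y z))"

definition has_invariant_line :: "cfun3 \<Rightarrow> cfun3 \<Rightarrow> cfun3 \<Rightarrow> bool" where
  "has_invariant_line A0 A1 A2 \<longleftrightarrow> (\<exists>a b. (a, b) \<noteq> (0, 0) \<and>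
     invariant_curve A0 A1 A2 (\<lambda>x0 x1 x2. a * x0 + b * x1))"

text \<open>Invariance of a curve {F=0} for the foliation P dt + Q dw on a chart C^2.\<close>
definition invariant_curve2 :: "cfun2 \<Rightarrow> cfun2 \<Rightarrow> cfun2 \<Rightarrow> bool" where
  "invariant_curve2 P Q F \<longleftrightarrow> (\<exists>T. poly2 T \<and> (\<forall>t w.
      P t w * deriv (\<lambda>s. F t s) w - Q t w * deriv (\<lambda>s. F s w) t = F t w * T t w))"

text \<open>Charts of F_k over the base chart t = x1/x0 of the natural fibration:
  (t,z) \<mapsto> [1:t:z] (z = x2/x0^k, isomorphic onto x0\<noteq>0), and
  (t,w) with w = x0^k/x2, i.e. (t,w) \<mapsto> [1:t:1/w] for w \<noteq> 0, E = {w = 0}.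
  A saturated representative of a foliation on a chart given on an open
  dense set U by alpha dt + beta dv is a polynomial form P dt + Q dv with
  finitely many zeros, proportional to alpha dt + beta dv on U.\<close>
definition sat_rep :: "(complex \<times> complex) set \<Rightarrow> cfun2 \<Rightarrow> cfun2 \<Rightarrow> cfun2 \<Rightarrow> cfun2 \<Rightarrow> bool" where
  "sat_rep U \<alpha> \<beta> P Q \<longleftrightarrow> poly2 P \<and> poly2 Q \<and> (\<exists>t v. P t v \<noteq> 0 \<or> Q t v \<noteq> 0) \<and>
     finite {(t, v). P t v = 0 \<and> Q t v = 0} \<and>
     (\<forall>t v. (t, v) \<in> U \<longrightarrow> \<alpha> t v * Q t v = \<beta> t v * P t v)"

definition G_rep_z :: "cfun3 \<Rightarrow> cfun3 \<Rightarrow> cfun2 \<Rightarrow> cfun2 \<Rightarrow> bool" where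
  "G_rep_z A1 A2 P Q \<longleftrightarrow> sat_rep UNIV (\<lambda>t z. A1 1 t z) (\<lambda>t z. A2 1 t z) P Q"

definition G_rep_w :: "cfun3 \<Rightarrow> cfun3 \<Rightarrow> cfun2 \<Rightarrow> cfun2 \<Rightarrow> bool" where
  "G_rep_w A1 A2 P Q \<longleftrightarrow> sat_rep {(t, w). w \<noteq> 0}
      (\<lambda>t w. A1 1 t (1 / w)) (\<lambda>t w. - A2 1 t (1 / w) / w^2) P Q"

text \<open>Riccati: for all fibres {t = c} outside a finite set, G is transverse to
  the fibre at every point of it (the fibre over c is covered by the two charts).\<close>
definition riccati_G :: "cfun3 \<Rightarrow> cfun3 \<Rightarrow> bool" where
  "riccati_G A1 A2 \<longleftrightarrow> (\<exists>P Q P' Q' S. G_rep_z A1 A2 P Q \<and> G_rep_w A1 A2 P' Q' \<and>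
     finite S \<and> (\<forall>c. c \<notin> S \<longrightarrow> (\<forall>z. Q c z \<noteq> 0) \<and> (\<forall>w. Q' c w \<noteq> 0)))"

definition E_invariant :: "cfun3 \<Rightarrow> cfun3 \<Rightarrow> bool" where
  "E_invariant A1 A2 \<longleftrightarrow> (\<exists>P Q. G_rep_w A1 A2 P Q \<and> invariant_curve2 P Q (\<lambda>t w. w))"

end

theory Submission
  imports Defs "HOL-Complex_Analysis.Cauchy_Integral_Formula"
begin

lemma poly3_monos:
  fixes w :: "'i \<Rightarrow> complex" and fa fb fe :: "'i \<Rightarrow> nat"
  assumes S: "finite S"
  shows "poly3 (\<lambda>x y z. \<Sum>s\<in>S. w s * x^fa s * y^fb s * z^fe s)"
proof -
  define N where "N = Max (insert 0 (fa`S \<union> fb`S \<union> fe`S))"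
  have bd: "fa s \<le> N \<and> fb s \<le> N \<and> fe s \<le> N" if "s\<in>S" for s
    unfolding N_def using S that by (auto intro: Max_ge)
  define c where "c a b e = (\<Sum>s\<in>{s. s\<in>S \<and> (fa s, fb s, fe s) = (a,b,e)}. w s)" for a b e
  define T where "T = {..N} \<times> {..N} \<times> {..N}"
  show ?thesis unfolding poly3_def
  proof (intro exI allI)
    fix x y z :: complex
    have "(\<Sum>s\<in>S. w s * x^fa s * y^fb s * z^fe s)
        = (\<Sum>t\<in>T. \<Sum>s\<in>{s. s\<in>S \<and> (fa s, fb s, fe s) = t}. w s * x^fa s * y^fb s * z^fe s)"
      by (rule sum.group[symmetric]) (use S bd in \<open>auto simp: T_def\<close>)
    also have "\<dots> = (\<Sum>t\<in>T. (case t of (a,b,e) \<Rightarrow> c a b e * x^a * y^b * z^e))"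
    proof (rule sum.cong[OF refl])
      fix t assume "t \<in> T"
      obtain a b e where t: "t = (a,b,e)" by (cases t) auto
      have "(\<Sum>s\<in>{s. s\<in>S \<and> (fa s, fb s, fe s) = t}. w s * x^fa s * y^fb s * z^fe s)
          = (\<Sum>s\<in>{s. s\<in>S \<and> (fa s, fb s, fe s) = t}. w s * x^a * y^b * z^e)"
        by (rule sum.cong) (auto simp: t)
      also have "\<dots> = c a b e * x^a * y^b * z^e"
        by (simp add: c_def t sum_distrib_right)
      finally show "(\<Sum>s\<in>{s. s\<in>S \<and> (fa s, fb s, fe s) = t}. w s * x^fa s * y^fb s * z^fe s)
          = (case t of (a,b,e) \<Rightarrow> c a b e * x^a * y^b * z^e)" by (simp add: t)
    qed
    also have "\<dots> = (\<Sum>a\<le>N. \<Sum>b\<le>N. \<Sum>e\<le>N. c a b e * x^a * y^b * z^e)"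
      unfolding T_def sum.cartesian_product' by simp
    finally show "(\<Sum>s\<in>S. w s * x^fa s * y^fb s * z^fe s) = (\<Sum>a\<le>N. \<Sum>b\<le>N. \<Sum>e\<le>N. c a b e * x^a * y^b * z^e)" .
  qed
qed

lemma poly2_monos:
  fixes w :: "'i \<Rightarrow> complex" and fa fb :: "'i \<Rightarrow> nat"
  assumes S: "finite S"
  shows "poly2 (\<lambda>x y. \<Sum>s\<in>S. w s * x^fa s * y^fb s)"
proof -
  define N where "N = Max (insert 0 (fa`S \<union> fb`S))"
  have bd: "fa s \<le> N \<and> fb s \<le> N" if "s\<in>S" for s
    unfolding N_def using S that by (auto intro: Max_ge)
  define c where "c a b = (\<Sum>s\<in>{s. s\<in>S \<and> (fa s, fb s) = (a,b)}. w s)" for a b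
  define T where "T = {..N} \<times> {..N}"
  show ?thesis unfolding poly2_def
  proof (intro exI allI)
    fix x y :: complex
    have "(\<Sum>s\<in>S. w s * x^fa s * y^fb s)
        = (\<Sum>t\<in>T. \<Sum>s\<in>{s. s\<in>S \<and> (fa s, fb s) = t}. w s * x^fa s * y^fb s)"
      by (rule sum.group[symmetric]) (use S bd in \<open>auto simp: T_def\<close>)
    also have "\<dots> = (\<Sum>t\<in>T. (case t of (a,b) \<Rightarrow> c a b * x^a * y^b))"
    proof (rule sum.cong[OF refl])
      fix t assume "t \<in> T"
      obtain a b where t: "t = (a,b)" by (cases t) auto
      have "(\<Sum>s\<in>{s. s\<in>S \<and> (fa s, fb s) = t}. w s * x^fa s * y^fb s)
          = (\<Sum>s\<in>{s. s\<in>S \<and> (fa s, fb s) = t}. w s * x^a * y^b)"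
        by (rule sum.cong) (auto simp: t)
      also have "\<dots> = c a b * x^a * y^b"
        by (simp add: c_def t sum_distrib_right)
      finally show "(\<Sum>s\<in>{s. s\<in>S \<and> (fa s, fb s) = t}. w s * x^fa s * y^fb s)
          = (case t of (a,b) \<Rightarrow> c a b * x^a * y^b)" by (simp add: t)
    qed
    also have "\<dots> = (\<Sum>a\<le>N. \<Sum>b\<le>N. c a b * x^a * y^b)"
      unfolding T_def sum.cartesian_product' by simp
    finally show "(\<Sum>s\<in>S. w s * x^fa s * y^fb s) = (\<Sum>a\<le>N. \<Sum>b\<le>N. c a b * x^a * y^b)" .
  qed
qed

lemma poly3_form:
  assumes "poly3 f"
  obtains S :: "(nat\<times>nat\<times>nat) set" and w fa fb fe where "finite S"
    "\<And>x y z. f x y z = (\<Sum>s\<in>S. w s * x^fa s * y^fb s * z^fe s)"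
proof -
  obtain c N where c: "\<And>x y z. f x y z = (\<Sum>a\<le>N. \<Sum>b\<le>N. \<Sum>e\<le>N. c a b e * x^a * y^b * z^e)"
    using assms unfolding poly3_def by blast
  show ?thesis
  proof (rule that[of "{..N}\<times>{..N}\<times>{..N}" "\<lambda>(a,b,e). c a b e" fst "\<lambda>s. fst (snd s)" "\<lambda>s. snd (snd s)"])
    fix x y z
    show "f x y z = (\<Sum>s\<in>{..N}\<times>{..N}\<times>{..N}. (case s of (a,b,e) \<Rightarrow> c a b e) * x^fst s * y^fst (snd s) * z^snd (snd s))"
      unfolding c sum.cartesian_product' by simp
  qed simp
qed

lemma poly2_form:
  assumes "poly2 f"
  obtains S :: "(nat\<times>nat) set" and w fa fb where "finite S"
    "\<And>x y. f x y = (\<Sum>s\<in>S. w s * x^fa s * y^fb s)"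
proof -
  obtain c N where c: "\<And>x y. f x y = (\<Sum>a\<le>N. \<Sum>b\<le>N. c a b * x^a * y^b)"
    using assms unfolding poly2_def by blast
  show ?thesis
  proof (rule that[of "{..N}\<times>{..N}" "\<lambda>(a,b). c a b" fst snd])
    fix x y
    show "f x y = (\<Sum>s\<in>{..N}\<times>{..N}. (case s of (a,b) \<Rightarrow> c a b) * x^fst s * y^snd s)"
      unfolding c sum.cartesian_product' by simp
  qed simp
qed

lemma poly3_add: assumes "poly3 f" "poly3 g" shows "poly3 (\<lambda>x y z. f x y z + g x y z)"
proof -
  obtain S1 :: "(nat\<times>nat\<times>nat) set" and w1 a1 b1 e1 where S1: "finite S1" and f: "\<And>x y z. f x y z = (\<Sum>s\<in>S1. w1 s * x^a1 s * y^b1 s * z^e1 s)"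
    using poly3_form[OF assms(1)] by blast
  obtain S2 :: "(nat\<times>nat\<times>nat) set" and w2 a2 b2 e2 where S2: "finite S2" and g: "\<And>x y z. g x y z = (\<Sum>s\<in>S2. w2 s * x^a2 s * y^b2 s * z^e2 s)"
    using poly3_form[OF assms(2)] by blast
  have "poly3 (\<lambda>x y z. \<Sum>s\<in>S1 <+> S2. case_sum w1 w2 s * x^case_sum a1 a2 s * y^case_sum b1 b2 s * z^case_sum e1 e2 s)"
    by (rule poly3_monos) (use S1 S2 in auto)
  then show ?thesis by (simp add: sum.Plus[OF S1 S2] f g o_def)
qed

lemma poly3_mult: assumes "poly3 f" "poly3 g" shows "poly3 (\<lambda>x y z. f x y z * g x y z)"
proof -
  obtain S1 :: "(nat\<times>nat\<times>nat) set" and w1 a1 b1 e1 where S1: "finite S1" and f: "\<And>x y z. f x y z = (\<Sum>s\<in>S1. w1 s * x^a1 s * y^b1 s * z^e1 s)"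
    using poly3_form[OF assms(1)] by blast
  obtain S2 :: "(nat\<times>nat\<times>nat) set" and w2 a2 b2 e2 where S2: "finite S2" and g: "\<And>x y z. g x y z = (\<Sum>s\<in>S2. w2 s * x^a2 s * y^b2 s * z^e2 s)"
    using poly3_form[OF assms(2)] by blast
  have "poly3 (\<lambda>x y z. \<Sum>p\<in>S1 \<times> S2. (w1 (fst p) * w2 (snd p)) * x^(a1 (fst p) + a2 (snd p)) * y^(b1 (fst p) + b2 (snd p)) * z^(e1 (fst p) + e2 (snd p)))"
    by (rule poly3_monos) (use S1 S2 in auto)
  moreover have "(\<Sum>p\<in>S1 \<times> S2. (w1 (fst p) * w2 (snd p)) * x^(a1 (fst p) + a2 (snd p)) * y^(b1 (fst p) + b2 (snd p)) * z^(e1 (fst p) + e2 (snd p)))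
     = f x y z * g x y z" for x y z
    unfolding f g sum_product sum.cartesian_product'
    by (intro sum.cong refl) (simp add: power_add algebra_simps)
  ultimately show ?thesis by simp
qed

lemma poly2_add: assumes "poly2 f" "poly2 g" shows "poly2 (\<lambda>x y. f x y + g x y)"
proof -
  obtain S1 :: "(nat\<times>nat) set" and w1 a1 b1 where S1: "finite S1" and f: "\<And>x y. f x y = (\<Sum>s\<in>S1. w1 s * x^a1 s * y^b1 s)"
    using poly2_form[OF assms(1)] by blast
  obtain S2 :: "(nat\<times>nat) set" and w2 a2 b2 where S2: "finite S2" and g: "\<And>x y. g x y = (\<Sum>s\<in>S2. w2 s * x^a2 s * y^b2 s)"
    using poly2_form[OF assms(2)] by blast
  have "poly2 (\<lambda>x y. \<Sum>s\<in>S1 <+> S2. case_sum w1 w2 s * x^case_sum a1 a2 s * y^case_sum b1 b2 s)"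
    by (rule poly2_monos) (use S1 S2 in auto)
  then show ?thesis by (simp add: sum.Plus[OF S1 S2] f g o_def)
qed

lemma poly2_mult: assumes "poly2 f" "poly2 g" shows "poly2 (\<lambda>x y. f x y * g x y)"
proof -
  obtain S1 :: "(nat\<times>nat) set" and w1 a1 b1 where S1: "finite S1" and f: "\<And>x y. f x y = (\<Sum>s\<in>S1. w1 s * x^a1 s * y^b1 s)"
    using poly2_form[OF assms(1)] by blast
  obtain S2 :: "(nat\<times>nat) set" and w2 a2 b2 where S2: "finite S2" and g: "\<And>x y. g x y = (\<Sum>s\<in>S2. w2 s * x^a2 s * y^b2 s)"
    using poly2_form[OF assms(2)] by blast
  have "poly2 (\<lambda>x y. \<Sum>p\<in>S1 \<times> S2. (w1 (fst p) * w2 (snd p)) * x^(a1 (fst p) + a2 (snd p)) * y^(b1 (fst p) + b2 (snd p)))"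
    by (rule poly2_monos) (use S1 S2 in auto)
  moreover have "(\<Sum>p\<in>S1 \<times> S2. (w1 (fst p) * w2 (snd p)) * x^(a1 (fst p) + a2 (snd p)) * y^(b1 (fst p) + b2 (snd p)))
     = f x y * g x y" for x y
    unfolding f g sum_product sum.cartesian_product'
    by (intro sum.cong refl) (simp add: power_add algebra_simps)
  ultimately show ?thesis by simp
qed

lemma poly3_const: "poly3 (\<lambda>x y z. c)"
  using poly3_monos[of "{()}" "\<lambda>_. c" "\<lambda>_. 0" "\<lambda>_. 0" "\<lambda>_. 0"] by simp
lemma poly3_x: "poly3 (\<lambda>x y z. x)"
  using poly3_monos[of "{()}" "\<lambda>_. 1" "\<lambda>_. 1" "\<lambda>_. 0" "\<lambda>_. 0"] by simp
lemma poly3_y: "poly3 (\<lambda>x y z. y)"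
  using poly3_monos[of "{()}" "\<lambda>_. 1" "\<lambda>_. 0" "\<lambda>_. 1" "\<lambda>_. 0"] by simp
lemma poly3_z: "poly3 (\<lambda>x y z. z)"
  using poly3_monos[of "{()}" "\<lambda>_. 1" "\<lambda>_. 0" "\<lambda>_. 0" "\<lambda>_. 1"] by simp
lemma poly2_const: "poly2 (\<lambda>x y. c)"
  using poly2_monos[of "{()}" "\<lambda>_. c" "\<lambda>_. 0" "\<lambda>_. 0"] by simp
lemma poly2_x: "poly2 (\<lambda>x y. x)"
  using poly2_monos[of "{()}" "\<lambda>_. 1" "\<lambda>_. 1" "\<lambda>_. 0"] by simp
lemma poly2_y: "poly2 (\<lambda>x y. y)"
  using poly2_monos[of "{()}" "\<lambda>_. 1" "\<lambda>_. 0" "\<lambda>_. 1"] by simp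

lemma poly3_sum: "finite I \<Longrightarrow> (\<And>i. i \<in> I \<Longrightarrow> poly3 (f i)) \<Longrightarrow> poly3 (\<lambda>x y z. \<Sum>i\<in>I. f i x y z)"
  by (induction I rule: finite_induct) (auto intro: poly3_add poly3_const)
lemma poly2_sum: "finite I \<Longrightarrow> (\<And>i. i \<in> I \<Longrightarrow> poly2 (f i)) \<Longrightarrow> poly2 (\<lambda>x y. \<Sum>i\<in>I. f i x y)"
  by (induction I rule: finite_induct) (auto intro: poly2_add poly2_const)
lemma poly3_pow: "poly3 f \<Longrightarrow> poly3 (\<lambda>x y z. f x y z ^ n)"
  by (induction n) (auto intro: poly3_mult poly3_const)
lemma poly2_pow: "poly2 f \<Longrightarrow> poly2 (\<lambda>x y. f x y ^ n)"
  by (induction n) (auto intro: poly2_mult poly2_const)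
lemma poly3_diff: assumes "poly3 f" "poly3 g" shows "poly3 (\<lambda>x y z. f x y z - g x y z)"
proof -
  have "poly3 (\<lambda>x y z. f x y z + (-1) * g x y z)"
    by (intro poly3_add poly3_mult poly3_const assms)
  then show ?thesis by simp
qed
lemma poly2_diff: assumes "poly2 f" "poly2 g" shows "poly2 (\<lambda>x y. f x y - g x y)"
proof -
  have "poly2 (\<lambda>x y. f x y + (-1) * g x y)"
    by (intro poly2_add poly2_mult poly2_const assms)
  then show ?thesis by simp
qed
lemma poly3_uminus: assumes "poly3 f" shows "poly3 (\<lambda>x y z. - f x y z)"
  using poly3_diff[OF poly3_const assms, of 0] by simp
lemma poly2_uminus: assumes "poly2 f" shows "poly2 (\<lambda>x y. - f x y)"
  using poly2_diff[OF poly2_const assms, of 0] by simp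

lemmas poly3_intros = poly3_add poly3_mult poly3_const poly3_x poly3_y poly3_z poly3_sum poly3_pow poly3_diff poly3_uminus
lemmas poly2_intros = poly2_add poly2_mult poly2_const poly2_x poly2_y poly2_sum poly2_pow poly2_diff poly2_uminus

lemma poly2_cont2: assumes "poly2 f" shows "continuous_on UNIV (\<lambda>w. f t w)"
proof -
  obtain c N where c: "\<And>x y. f x y = (\<Sum>a\<le>N. \<Sum>b\<le>N. c a b * x^a * y^b)"
    using assms unfolding poly2_def by blast
  show ?thesis unfolding c by (intro continuous_intros)
qed

definition lev :: "nat \<Rightarrow> (nat\<Rightarrow>nat\<Rightarrow>nat\<Rightarrow>complex) \<Rightarrow> nat \<Rightarrow> complex \<Rightarrow> complex \<Rightarrow> complex" where
  "lev M C c x y = (\<Sum>a\<le>M. \<Sum>b\<le>M. C a b c * x^a * y^b)"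

lemma lev_1: "lev M C c 1 t = (\<Sum>b\<le>M. (\<Sum>a\<le>M. C a b c) * t^b)"
proof -
  have "lev M C c 1 t = (\<Sum>a\<le>M. \<Sum>b\<le>M. C a b c * t^b)" unfolding lev_def by simp
  also have "\<dots> = (\<Sum>b\<le>M. \<Sum>a\<le>M. C a b c * t^b)" by (rule sum.swap)
  also have "\<dots> = (\<Sum>b\<le>M. (\<Sum>a\<le>M. C a b c) * t^b)" by (simp add: sum_distrib_right)
  finally show ?thesis .
qed

lemma lev_zero_all: "(\<And>a b. a \<le> M \<Longrightarrow> b \<le> M \<Longrightarrow> C a b c = 0) \<Longrightarrow> lev M C c x y = 0"
  unfolding lev_def by simp

lemma homog_zero:
  assumes supp: "\<forall>a b. C a b c \<noteq> 0 \<longrightarrow> int a + int b = n"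
    and z: "\<forall>t. lev M C c 1 t = 0" and ab: "a \<le> M" "b \<le> M"
  shows "C a b c = 0"
proof (rule ccontr)
  assume nz: "C a b c \<noteq> 0"
  have "\<forall>b'\<le>M. (\<Sum>a'\<le>M. C a' b' c) = 0"
    using z unfolding lev_1 by (subst (asm) Transcendental.polyfun_eq_0) blast
  then have s0: "(\<Sum>a'\<le>M. C a' b c) = 0" using ab by blast
  have "(\<Sum>a'\<le>M. C a' b c) = C a b c + (\<Sum>a'\<in>{..M}-{a}. C a' b c)"
    using ab by (simp add: sum.remove)
  also have "(\<Sum>a'\<in>{..M}-{a}. C a' b c) = 0"
  proof (rule sum.neutral, rule ballI)
    fix a' assume "a' \<in> {..M} - {a}"
    then have "a' \<noteq> a" by auto
    show "C a' b c = 0"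
    proof (rule ccontr)
      assume "C a' b c \<noteq> 0"
      then have "int a' + int b = n" "int a + int b = n" using supp nz by auto
      then show False using \<open>a' \<noteq> a\<close> by simp
    qed
  qed
  finally show False using s0 nz by simp
qed

lemma lev_roots:
  assumes "infinite {t. lev M C c 1 t = 0}" shows "lev M C c 1 t = 0"
proof -
  have "\<not> (\<exists>i\<le>M. (\<Sum>a\<le>M. C a i c) \<noteq> 0)"
    using assms polyfun_finite_roots[of "\<lambda>b. \<Sum>a\<le>M. C a b c" M] unfolding lev_1 by blast
  then show ?thesis unfolding lev_1 by simp
qed

lemma lev_finite_roots:
  assumes "lev M C c 1 t0 \<noteq> 0" shows "finite {t. lev M C c 1 t = 0}"
  using lev_roots assms by blast

lemma biv_unique:
  fixes c :: "nat \<Rightarrow> nat \<Rightarrow> complex"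
  assumes z: "\<forall>x y. (\<Sum>i\<le>N. \<Sum>j\<le>N. c i j * x^i * y^j) = 0" and ij: "i \<le> N" "j \<le> N"
  shows "c i j = 0"
proof -
  have "\<forall>x. (\<Sum>i\<le>N. c i j * x^i) = 0"
  proof
    fix x
    have "\<forall>y. (\<Sum>j\<le>N. (\<Sum>i\<le>N. c i j * x^i) * y^j) = 0"
    proof
      fix y
      have "(\<Sum>j\<le>N. (\<Sum>i\<le>N. c i j * x^i) * y^j) = (\<Sum>j\<le>N. \<Sum>i\<le>N. c i j * x^i * y^j)"
        by (simp add: sum_distrib_right)
      also have "\<dots> = (\<Sum>i\<le>N. \<Sum>j\<le>N. c i j * x^i * y^j)" by (rule sum.swap)
      finally show "(\<Sum>j\<le>N. (\<Sum>i\<le>N. c i j * x^i) * y^j) = 0" using z by simp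
    qed
    then show "(\<Sum>i\<le>N. c i j * x^i) = 0"
      using ij by (subst (asm) Transcendental.polyfun_eq_0) blast
  qed
  then show ?thesis using ij by (subst (asm) Transcendental.polyfun_eq_0) blast
qed

lemma hom_scale:
  assumes "\<forall>a b. C a b c \<noteq> 0 \<longrightarrow> a + b = n"
  shows "lev M C c (u*x) (u*y) = u^n * lev M C c x y"
  unfolding lev_def sum_distrib_left
proof (intro sum.cong refl)
  fix a b
  show "C a b c * (u * x) ^ a * (u * y) ^ b = u ^ n * (C a b c * x ^ a * y ^ b)"
  proof (cases "C a b c = 0")
    case False
    then have "n = a + b" using assms by auto
    then show ?thesis by (simp add: power_mult_distrib power_add)
  qed simp
qed

lemma cont_at0:
  fixes f :: "complex \<Rightarrow> complex"
  assumes "continuous_on UNIV f" "\<And>w. w \<noteq> 0 \<Longrightarrow> f w = 0" shows "f 0 = 0"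
proof -
  have "(f \<longlongrightarrow> f 0) (at 0)"
    using assms(1) by (simp add: continuous_on_eq_continuous_at isContD)
  moreover have "(f \<longlongrightarrow> 0) (at 0)"
  proof -
    have "eventually (\<lambda>w. 0 = f w) (at (0::complex))"
      using assms(2) by (auto simp: eventually_at_filter)
    then show ?thesis by (rule Lim_transform_eventually[OF tendsto_const])
  qed
  ultimately show ?thesis using tendsto_unique[OF at_neq_bot] by blast
qed

lemma sat_chart:
  assumes sat: "saturated_fol k A0 A1 A2"
    and eul: "\<forall>x y z. x * A0 x y z + y * A1 x y z + of_nat k * z * A2 x y z = 0"
  shows "finite {(t,z). A1 1 t z = 0 \<and> A2 1 t z = 0}"
proof -
  obtain F :: "(complex\<times>complex\<times>complex) set" where F: "finite F" and
    H: "\<forall>x0 x1 x2. (x0, x1, x2) \<noteq> (0, 0, 0) \<and> A0 x0 x1 x2 = 0 \<and> A1 x0 x1 x2 = 0 \<and> A2 x0 x1 x2 = 0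
        \<longrightarrow> (\<exists>(p0, p1, p2) \<in> F. \<exists>u. u \<noteq> 0 \<and> x0 = u * p0 \<and> x1 = u * p1 \<and> x2 = u^k * p2)"
    using sat unfolding saturated_fol_def by blast
  have "{(t,z). A1 1 t z = 0 \<and> A2 1 t z = 0} \<subseteq> (\<lambda>(p0,p1,p2). (p1/p0, p2/p0^k)) ` F"
  proof clarify
    fix t z assume a: "A1 1 t z = 0" "A2 1 t z = 0"
    have "A0 1 t z = 0" using eul[rule_format, of 1 t z] a by simp
    then obtain p0 p1 p2 u where p: "(p0,p1,p2) \<in> F" "u \<noteq> 0" "1 = u * p0" "t = u * p1" "z = u^k * p2"
      using H[rule_format, of 1 t z] a by fastforce
    have p0: "p0 = 1 / u" using p by (simp add: field_simps)
    have e1: "p1/p0 = t" using p(4) unfolding p0 by simp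
    have e2: "p2/p0^k = z" using p(5) unfolding p0 by (simp add: power_one_over)
    have "(t, z) = (p1/p0, p2/p0^k)" using e1 e2 by simp
    then show "(t, z) \<in> (\<lambda>(p0,p1,p2). (p1/p0, p2/p0^k)) ` F" using p(1) by force
  qed
  then show ?thesis using F finite_subset by blast
qed

lemma qhom_box:
  assumes q: "qhom k e A" and k: "k \<ge> 1" and eM: "e \<le> int M"
  obtains C where "\<forall>a b c. C a b c \<noteq> 0 \<longrightarrow> int a + int b + int k * int c = e"
    "\<forall>x y z. A x y z = (\<Sum>c\<le>M. lev M C c x y * z^c)"
proof -
  let ?T = "{(a,b,c). int a + int b + int k * int c = e}"
  let ?B = "{..M} \<times> {..M} \<times> {..M}"
  obtain coef where A: "\<And>x y z. A x y z = (\<Sum>(a,b,c)\<in>?T. coef a b c * x^a * y^b * z^c)"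
    using q unfolding qhom_def by blast
  define C where "C a b c = (if int a + int b + int k * int c = e then coef a b c else 0)" for a b c
  have supp: "\<forall>a b c. C a b c \<noteq> 0 \<longrightarrow> int a + int b + int k * int c = e"
    unfolding C_def by auto
  have TB: "?T \<subseteq> ?B"
  proof
    fix p assume p: "p \<in> ?T"
    obtain a b c where pe: "p = (a,b,c)" by (cases p)
    have h: "int a + int b + int k * int c = e" using p pe by simp
    have "int c \<le> int k * int c" using k by (simp add: mult_le_cancel_right1)
    then have "a \<le> M" "b \<le> M" "c \<le> M" using h eM by linarith+
    then show "p \<in> ?B" using pe by simp
  qed
  show ?thesis
  proof (rule that[OF supp], intro allI)
    fix x y z
    have "A x y z = (\<Sum>(a,b,c)\<in>?T. C a b c * x^a * y^b * z^c)"
      unfolding A by (rule sum.cong) (auto simp: C_def)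
    also have "\<dots> = (\<Sum>(a,b,c)\<in>?B. C a b c * x^a * y^b * z^c)"
      by (rule sum.mono_neutral_left) (use TB in \<open>auto simp: C_def split: if_splits\<close>)
    also have "\<dots> = (\<Sum>a\<le>M. \<Sum>b\<le>M. \<Sum>c\<le>M. C a b c * x^a * y^b * z^c)"
      by (simp add: sum.cartesian_product')
    also have "\<dots> = (\<Sum>a\<le>M. \<Sum>c\<le>M. \<Sum>b\<le>M. C a b c * x^a * y^b * z^c)"
      by (rule sum.cong[OF refl], rule sum.swap)
    also have "\<dots> = (\<Sum>c\<le>M. \<Sum>a\<le>M. \<Sum>b\<le>M. C a b c * x^a * y^b * z^c)"
      by (rule sum.swap)
    also have "\<dots> = (\<Sum>c\<le>M. lev M C c x y * z^c)"
      by (simp add: lev_def sum_distrib_right)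
    finally show "A x y z = (\<Sum>c\<le>M. lev M C c x y * z^c)" .
  qed
qed

lemma lev_beyond: "(\<forall>a b c. C a b c \<noteq> 0 \<longrightarrow> c \<le> M) \<Longrightarrow> M < c \<Longrightarrow> lev M C c x y = 0"
  unfolding lev_def by (metis (no_types, lifting) mult_eq_0_iff not_le sum.neutral)

lemma euler_levels:
  assumes eul: "\<forall>x y z. x * A0 x y z + y * A1 x y z + of_nat k * z * A2 x y z = 0"
    and f0: "\<forall>x y z. A0 x y z = (\<Sum>c\<le>M. lev M C0 c x y * z^c)"
    and f1: "\<forall>x y z. A1 x y z = (\<Sum>c\<le>M. lev M C1 c x y * z^c)"
    and f2: "\<forall>x y z. A2 x y z = (\<Sum>c\<le>M. lev M C2 c x y * z^c)"
    and b0: "\<forall>a b c. C0 a b c \<noteq> 0 \<longrightarrow> c \<le> M"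
    and b1: "\<forall>a b c. C1 a b c \<noteq> 0 \<longrightarrow> c \<le> M"
    and b2: "\<forall>a b c. C2 a b c \<noteq> 0 \<longrightarrow> c \<le> M"
  shows "x * lev M C0 0 x y + y * lev M C1 0 x y = 0"
    and "x * lev M C0 (Suc c) x y + y * lev M C1 (Suc c) x y + of_nat k * lev M C2 c x y = 0"
proof -
  define u where "u c = x * lev M C0 c x y + y * lev M C1 c x y" for c
  define v where "v c = of_nat k * lev M C2 c x y" for c
  define g where "g c = (if c \<le> M then u c else 0) + (if c = 0 then 0 else v (c - 1))" for c
  have gz: "\<forall>z. (\<Sum>c\<le>Suc M. g c * z^c) = 0"
  proof
    fix z
    have s1: "(\<Sum>c\<le>Suc M. (if c \<le> M then u c else 0) * z^c) = (\<Sum>c\<le>M. u c * z^c)"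
      by (simp add: sum.atMost_Suc)
    have s2: "(\<Sum>c\<le>Suc M. (if c = 0 then 0 else v (c - 1)) * z^c) = (\<Sum>c\<le>M. v c * z^(Suc c))"
      by (subst sum.atMost_Suc_shift) simp
    have "(\<Sum>c\<le>Suc M. g c * z^c) = (\<Sum>c\<le>Suc M. (if c \<le> M then u c else 0) * z^c)
        + (\<Sum>c\<le>Suc M. (if c = 0 then 0 else v (c - 1)) * z^c)"
      unfolding g_def by (simp add: distrib_right sum.distrib)
    also have "\<dots> = x * A0 x y z + y * A1 x y z + of_nat k * z * A2 x y z"
    proof -
      have "x * A0 x y z + y * A1 x y z + of_nat k * z * A2 x y z
         = (\<Sum>c\<le>M. x * (lev M C0 c x y * z^c)) + (\<Sum>c\<le>M. y * (lev M C1 c x y * z^c))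
           + (\<Sum>c\<le>M. of_nat k * z * (lev M C2 c x y * z^c))"
        unfolding f0[rule_format] f1[rule_format] f2[rule_format] sum_distrib_left by (rule refl)
      also have "\<dots> = (\<Sum>c\<le>M. x * (lev M C0 c x y * z^c) + y * (lev M C1 c x y * z^c)
           + of_nat k * z * (lev M C2 c x y * z^c))"
        by (simp only: sum.distrib)
      also have "\<dots> = (\<Sum>c\<le>M. u c * z^c + v c * z^(Suc c))"
        by (rule sum.cong[OF refl]) (simp add: u_def v_def algebra_simps)
      also have "\<dots> = (\<Sum>c\<le>M. u c * z^c) + (\<Sum>c\<le>M. v c * z^(Suc c))"
        by (simp only: sum.distrib)
      finally show ?thesis unfolding s1 s2 by simp
    qed
    also have "\<dots> = 0" using eul by blast
    finally show "(\<Sum>c\<le>Suc M. g c * z^c) = 0" .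
  qed
  then have gc: "\<And>c. c \<le> Suc M \<Longrightarrow> g c = 0"
    by (subst (asm) Transcendental.polyfun_eq_0) blast
  show "x * lev M C0 0 x y + y * lev M C1 0 x y = 0"
    using gc[of 0] by (simp add: g_def u_def)
  show "x * lev M C0 (Suc c) x y + y * lev M C1 (Suc c) x y + of_nat k * lev M C2 c x y = 0"
  proof (cases "c \<le> M")
    case True
    then have "g (Suc c) = 0" using gc by simp
    moreover have "Suc c > M \<Longrightarrow> lev M C0 (Suc c) x y = 0 \<and> lev M C1 (Suc c) x y = 0"
      using lev_beyond b0 b1 by blast
    ultimately show ?thesis by (auto simp: g_def u_def v_def split: if_splits)
  next
    case False
    then show ?thesis using lev_beyond[OF b0] lev_beyond[OF b1] lev_beyond[OF b2] by simp
  qed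
qed

lemma div_x:
  assumes "poly3 F"
  obtains G where "poly3 G" "\<forall>x y z. F x y z = F 0 y z + x * G x y z"
proof -
  obtain S :: "(nat\<times>nat\<times>nat) set" and w fa fb fe where S: "finite S" and
    F: "\<And>x y z. F x y z = (\<Sum>s\<in>S. w s * x^fa s * y^fb s * z^fe s)"
    using poly3_form[OF assms] by blast
  define G where "G x y z = (\<Sum>s\<in>S. (w s * (if fa s = 0 then 0 else 1)) * x^(fa s - 1) * y^fb s * z^fe s)" for x y z
  have "poly3 G" unfolding G_def
    by (intro poly3_sum poly3_mult poly3_pow poly3_const poly3_x poly3_y poly3_z S)
  moreover have "F x y z = F 0 y z + x * G x y z" for x y z
  proof -
    have "F x y z - F 0 y z = x * G x y z"
      unfolding F G_def sum_subtractf[symmetric] sum_distrib_left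
    proof (rule sum.cong[OF refl])
      fix s
      show "w s * x ^ fa s * y ^ fb s * z ^ fe s - w s * 0 ^ fa s * y ^ fb s * z ^ fe s =
         x * ((w s * (if fa s = 0 then 0 else 1)) * x ^ (fa s - 1) * y ^ fb s * z ^ fe s)"
        by (cases "fa s") (auto simp: algebra_simps)
    qed
    then show ?thesis by (simp add: algebra_simps)
  qed
  ultimately show ?thesis using that by blast
qed

lemma div_line:
  assumes "poly3 F"
  obtains G where "poly3 G" "\<forall>x y z. F x y z = F x (t0 * x) z + (y - t0 * x) * G x y z"
proof -
  obtain S :: "(nat\<times>nat\<times>nat) set" and w fa fb fe where S: "finite S" and
    F: "\<And>x y z. F x y z = (\<Sum>s\<in>S. w s * x^fa s * y^fb s * z^fe s)"
    using poly3_form[OF assms] by blast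
  define G where "G x y z = (\<Sum>s\<in>S. w s * x^fa s * z^fe s * (\<Sum>i<fb s. (t0 * x)^(fb s - Suc i) * y^i))" for x y z
  have "poly3 G" unfolding G_def
    by (intro poly3_sum poly3_mult poly3_pow poly3_const poly3_x poly3_y poly3_z S finite_lessThan)
  moreover have "F x y z = F x (t0 * x) z + (y - t0 * x) * G x y z" for x y z
  proof -
    have "F x y z - F x (t0 * x) z = (\<Sum>s\<in>S. (y - t0 * x) * (w s * x ^ fa s * z ^ fe s * (\<Sum>i<fb s. (t0 * x) ^ (fb s - Suc i) * y ^ i)))"
      unfolding F sum_subtractf[symmetric]
    proof (rule sum.cong[OF refl])
      fix s
      have pd: "y ^ fb s - (t0 * x) ^ fb s = (y - t0 * x) * (\<Sum>i<fb s. (t0 * x)^(fb s - Suc i) * y^i)"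
        by (rule power_diff_sumr2)
      have "w s * x ^ fa s * y ^ fb s * z ^ fe s - w s * x ^ fa s * (t0 * x) ^ fb s * z ^ fe s
          = (w s * x ^ fa s * z ^ fe s) * (y ^ fb s - (t0 * x) ^ fb s)"
        by (simp add: algebra_simps)
      also have "\<dots> = (y - t0 * x) * (w s * x ^ fa s * z ^ fe s * (\<Sum>i<fb s. (t0 * x) ^ (fb s - Suc i) * y ^ i))"
        unfolding pd by (simp only: mult_ac)
      finally show "w s * x ^ fa s * y ^ fb s * z ^ fe s - w s * x ^ fa s * (t0 * x) ^ fb s * z ^ fe s
          = (y - t0 * x) * (w s * x ^ fa s * z ^ fe s * (\<Sum>i<fb s. (t0 * x) ^ (fb s - Suc i) * y ^ i))" .
    qed
    also have "\<dots> = (y - t0 * x) * G x y z" unfolding G_def by (rule sum_distrib_left[symmetric])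
    finally have "F x y z - F x (t0 * x) z = (y - t0 * x) * G x y z" .
    then show ?thesis by (simp add: algebra_simps)
  qed
  ultimately show ?thesis using that by blast
qed

lemma deriv_lin: "deriv (\<lambda>s. a * s + b) x = (a::complex)"
  by (rule DERIV_imp_deriv) (auto intro!: derivative_eq_intros)
lemma deriv_lin2: "deriv (\<lambda>s. b + a * s) x = (a::complex)"
  by (rule DERIV_imp_deriv) (auto intro!: derivative_eq_intros)

lemma pd3_line:
  "pd3 0 (\<lambda>x0 x1 x2. a * x0 + b * x1) x0 x1 x2 = a"
  "pd3 1 (\<lambda>x0 x1 x2. a * x0 + b * x1) x0 x1 x2 = b"
  "pd3 2 (\<lambda>x0 x1 x2. a * x0 + b * x1) x0 x1 x2 = 0"
  by (simp_all add: pd3_def deriv_lin deriv_lin2)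

lemma sum_low1:
  fixes f :: "nat \<Rightarrow> complex"
  assumes "1 \<le> M" "\<And>c. 2 \<le> c \<Longrightarrow> f c = 0"
  shows "(\<Sum>c\<le>M. f c * z^c) = f 0 + f 1 * z"
proof -
  have "(\<Sum>c\<le>M. f c * z^c) = (\<Sum>c\<in>{0,1}. f c * z^c)"
    by (rule sum.mono_neutral_right) (use assms in auto)
  then show ?thesis by simp
qed

lemma sum_low0:
  fixes f :: "nat \<Rightarrow> complex"
  assumes "\<And>c. 1 \<le> c \<Longrightarrow> f c = 0"
  shows "(\<Sum>c\<le>M. f c * z^c) = f 0"
proof -
  have "(\<Sum>c\<le>M. f c * z^c) = (\<Sum>c\<in>{0}. f c * z^c)"
    by (rule sum.mono_neutral_right) (use assms in auto)
  then show ?thesis by simp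
qed

lemma box_ext:
  fixes c :: "nat \<Rightarrow> nat \<Rightarrow> complex"
  assumes z: "\<forall>i j. N < i \<or> N < j \<longrightarrow> c i j = 0" and NK: "N \<le> K"
  shows "(\<Sum>i\<le>N. \<Sum>j\<le>N. c i j * x^i * y^j) = (\<Sum>i\<le>K. \<Sum>j\<le>K. c i j * x^i * y^j)"
proof -
  have "(\<Sum>i\<le>K. \<Sum>j\<le>K. c i j * x^i * y^j) = (\<Sum>i\<le>K. \<Sum>j\<le>N. c i j * x^i * y^j)"
  proof (rule sum.cong[OF refl])
    fix i
    show "(\<Sum>j\<le>K. c i j * x^i * y^j) = (\<Sum>j\<le>N. c i j * x^i * y^j)"
      by (rule sum.mono_neutral_right) (use z NK in auto)
  qed
  also have "\<dots> = (\<Sum>i\<le>N. \<Sum>j\<le>N. c i j * x^i * y^j)"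
    by (rule sum.mono_neutral_right) (use z NK in auto)
  finally show ?thesis by simp
qed

lemma coeff_eq:
  fixes c c' :: "nat \<Rightarrow> nat \<Rightarrow> complex"
  assumes z1: "\<forall>i j. N1 < i \<or> N1 < j \<longrightarrow> c i j = 0"
    and z2: "\<forall>i j. N2 < i \<or> N2 < j \<longrightarrow> c' i j = 0"
    and eq: "\<forall>x y. (\<Sum>i\<le>N1. \<Sum>j\<le>N1. c i j * x^i * y^j) = (\<Sum>i\<le>N2. \<Sum>j\<le>N2. c' i j * x^i * y^j)"
  shows "c i j = c' i j"
proof -
  define K where "K = max N1 N2"
  have "\<forall>x y. (\<Sum>i\<le>K. \<Sum>j\<le>K. (c i j - c' i j) * x^i * y^j) = 0"
  proof (intro allI)
    fix x y
    have "(\<Sum>i\<le>K. \<Sum>j\<le>K. (c i j - c' i j) * x^i * y^j)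
        = (\<Sum>i\<le>K. \<Sum>j\<le>K. c i j * x^i * y^j) - (\<Sum>i\<le>K. \<Sum>j\<le>K. c' i j * x^i * y^j)"
      by (simp add: sum_subtractf left_diff_distrib)
    also have "\<dots> = 0"
      using box_ext[OF z1, of K x y] box_ext[OF z2, of K x y] eq by (simp add: K_def)
    finally show "(\<Sum>i\<le>K. \<Sum>j\<le>K. (c i j - c' i j) * x^i * y^j) = 0" .
  qed
  then have diff: "i \<le> K \<Longrightarrow> j \<le> K \<Longrightarrow> c i j - c' i j = 0"
    using biv_unique[where N=K and c="\<lambda>i j. c i j - c' i j" and i=i and j=j] by simp
  show ?thesis
  proof (cases "i \<le> K \<and> j \<le> K")
    case True then show ?thesis using diff by simp
  next
    case False
    then have "N1 < i \<or> N1 < j" "N2 < i \<or> N2 < j" by (auto simp: K_def)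
    then show ?thesis using z1[rule_format, of i j] z2[rule_format, of i j] by simp
  qed
qed

lemma infinite_line:
  assumes "\<forall>t\<in>T. (t, f t) \<in> X" "infinite (T :: complex set)"
  shows "infinite X"
proof
  assume fX: "finite X"
  have sub: "(\<lambda>t. (t, f t)) ` T \<subseteq> X" using assms(1) by auto
  have "finite ((\<lambda>t. (t, f t)) ` T)" by (rule finite_subset[OF sub fX])
  moreover have "inj_on (\<lambda>t. (t, f t)) T" by (rule inj_onI) simp
  ultimately have "finite T" by (rule finite_imageD)
  then show False using assms(2) by simp
qed

lemma infinite_vline:
  assumes "\<forall>z::complex. (t0, z) \<in> X"
  shows "infinite X"
proof
  assume fX: "finite X"
  have sub: "(\<lambda>z::complex. (t0, z)) ` UNIV \<subseteq> X" using assms by auto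
  have "finite ((\<lambda>z::complex. (t0, z)) ` UNIV)" by (rule finite_subset[OF sub fX])
  moreover have "inj_on (\<lambda>z::complex. (t0, z)) UNIV" by (rule inj_onI) simp
  ultimately have "finite (UNIV :: complex set)" by (rule finite_imageD)
  then show False using infinite_UNIV_char_0 by blast
qed

lemma cofinite_infinite: "finite (S :: complex set) \<Longrightarrow> infinite (UNIV - S)"
  by (rule Diff_infinite_finite[OF _ infinite_UNIV_char_0])

lemma exists_notin: "finite (S :: complex set) \<Longrightarrow> \<exists>t. t \<notin> S"
  by (rule ex_new_if_finite[OF infinite_UNIV_char_0])

locale folset =
  fixes k :: nat and d :: int and A0 A1 A2 :: cfun3 and M :: nat and C0 C1 C2 :: "nat \<Rightarrow> nat \<Rightarrow> nat \<Rightarrow> complex"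
  assumes k2: "k \<ge> 2"
    and nonzero: "\<exists>x y z. A0 x y z \<noteq> 0 \<or> A1 x y z \<noteq> 0 \<or> A2 x y z \<noteq> 0"
    and eul: "\<forall>x y z. x * A0 x y z + y * A1 x y z + of_nat k * z * A2 x y z = 0"
    and sat: "saturated_fol k A0 A1 A2"
    and f0: "\<forall>x y z. A0 x y z = (\<Sum>c\<le>M. lev M C0 c x y * z^c)"
    and f1: "\<forall>x y z. A1 x y z = (\<Sum>c\<le>M. lev M C1 c x y * z^c)"
    and f2: "\<forall>x y z. A2 x y z = (\<Sum>c\<le>M. lev M C2 c x y * z^c)"
    and s0: "\<forall>a b c. C0 a b c \<noteq> 0 \<longrightarrow> int a + int b + int k * int c = d - 1"
    and s1: "\<forall>a b c. C1 a b c \<noteq> 0 \<longrightarrow> int a + int b + int k * int c = d - 1"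
    and s2: "\<forall>a b c. C2 a b c \<noteq> 0 \<longrightarrow> int a + int b + int k * int c = d - int k"
    and M: "M = nat d"
begin

lemma kpos: "k \<ge> 1" using k2 by simp

lemma bound_gen:
  assumes "int a + int b + int k * int c = e" "e \<le> d"
  shows "a \<le> M \<and> b \<le> M \<and> c \<le> M"
proof -
  have "int c \<le> int k * int c" using kpos by (simp add: mult_le_cancel_right1)
  then show ?thesis using assms M by linarith
qed

lemma b0: "C0 a b c \<noteq> 0 \<Longrightarrow> a \<le> M \<and> b \<le> M \<and> c \<le> M"
proof -
  assume "C0 a b c \<noteq> 0"
  then have "int a + int b + int k * int c = d - 1" using s0 by blast
  then show ?thesis by (rule bound_gen) simp
qed
lemma b1: "C1 a b c \<noteq> 0 \<Longrightarrow> a \<le> M \<and> b \<le> M \<and> c \<le> M"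
proof -
  assume "C1 a b c \<noteq> 0"
  then have "int a + int b + int k * int c = d - 1" using s1 by blast
  then show ?thesis by (rule bound_gen) simp
qed
lemma b2: "C2 a b c \<noteq> 0 \<Longrightarrow> a \<le> M \<and> b \<le> M \<and> c \<le> M"
proof -
  assume "C2 a b c \<noteq> 0"
  then have "int a + int b + int k * int c = d - int k" using s2 by blast
  then show ?thesis by (rule bound_gen) simp
qed

lemma bb0: "\<forall>a b c. C0 a b c \<noteq> 0 \<longrightarrow> c \<le> M" using b0 by blast
lemma bb1: "\<forall>a b c. C1 a b c \<noteq> 0 \<longrightarrow> c \<le> M" using b1 by blast
lemma bb2: "\<forall>a b c. C2 a b c \<noteq> 0 \<longrightarrow> c \<le> M" using b2 by blast
lemma eul0: "x * lev M C0 0 x y + y * lev M C1 0 x y = 0"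
  by (rule euler_levels(1)[OF eul f0 f1 f2 bb0 bb1 bb2])
lemma eulS: "x * lev M C0 (Suc c) x y + y * lev M C1 (Suc c) x y + of_nat k * lev M C2 c x y = 0"
  by (rule euler_levels(2)[OF eul f0 f1 f2 bb0 bb1 bb2])

definition Z where "Z = {(t,z). A1 1 t z = 0 \<and> A2 1 t z = 0}"
lemma Zfin: "finite Z" unfolding Z_def using sat_chart[OF sat eul] .

lemma zero_lev0: "\<forall>t. lev M C0 c 1 t = 0 \<Longrightarrow> C0 a b c = 0"
proof -
  assume z: "\<forall>t. lev M C0 c 1 t = 0"
  have supp: "\<forall>a b. C0 a b c \<noteq> 0 \<longrightarrow> int a + int b = d - 1 - int k * int c"
  proof (intro allI impI)
    fix a b assume "C0 a b c \<noteq> 0"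
    then have "int a + int b + int k * int c = d - 1" using s0 by blast
    then show "int a + int b = d - 1 - int k * int c" by linarith
  qed
  show ?thesis
  proof (rule ccontr)
    assume nz: "C0 a b c \<noteq> 0"
    then have "a \<le> M" "b \<le> M" using b0 by blast+
    then show False using homog_zero[OF supp z] nz by blast
  qed
qed
lemma zero_lev1: "\<forall>t. lev M C1 c 1 t = 0 \<Longrightarrow> C1 a b c = 0"
proof -
  assume z: "\<forall>t. lev M C1 c 1 t = 0"
  have supp: "\<forall>a b. C1 a b c \<noteq> 0 \<longrightarrow> int a + int b = d - 1 - int k * int c"
  proof (intro allI impI)
    fix a b assume "C1 a b c \<noteq> 0"
    then have "int a + int b + int k * int c = d - 1" using s1 by blast
    then show "int a + int b = d - 1 - int k * int c" by linarith
  qed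
  show ?thesis
  proof (rule ccontr)
    assume nz: "C1 a b c \<noteq> 0"
    then have "a \<le> M" "b \<le> M" using b1 by blast+
    then show False using homog_zero[OF supp z] nz by blast
  qed
qed
lemma zero_lev2: "\<forall>t. lev M C2 c 1 t = 0 \<Longrightarrow> C2 a b c = 0"
proof -
  assume z: "\<forall>t. lev M C2 c 1 t = 0"
  have supp: "\<forall>a b. C2 a b c \<noteq> 0 \<longrightarrow> int a + int b = d - int k - int k * int c"
  proof (intro allI impI)
    fix a b assume "C2 a b c \<noteq> 0"
    then have "int a + int b + int k * int c = d - int k" using s2 by blast
    then show "int a + int b = d - int k - int k * int c" by linarith
  qed
  show ?thesis
  proof (rule ccontr)
    assume nz: "C2 a b c \<noteq> 0"
    then have "a \<le> M" "b \<le> M" using b2 by blast+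
    then show False using homog_zero[OF supp z] nz by blast
  qed
qed

definition Good where
  "Good \<longleftrightarrow> (\<forall>c a b. 2 \<le> c \<longrightarrow> C0 a b c = 0 \<and> C1 a b c = 0) \<and> (\<exists>a b. C0 a b 1 \<noteq> 0 \<or> C1 a b 1 \<noteq> 0)"

lemma unique_c:
  assumes "int a + int b + int k * int c = e" "int a + int b + int k * int c' = e"
  shows "c = c'"
proof -
  have "int k * int c = int k * int c'" using assms by linarith
  then show ?thesis using kpos by simp
qed

lemma r_iff:
  assumes am: "alg_mult_p2 A0 A1 r"
  shows "int r = d - int k \<longleftrightarrow> Good"
proof -
  obtain c0 c1 N where zN: "\<forall>i j. N < i \<or> N < j \<longrightarrow> c0 i j = 0 \<and> c1 i j = 0"
    and e0: "\<forall>x y. A0 x y 1 = (\<Sum>i\<le>N. \<Sum>j\<le>N. c0 i j * x^i * y^j)"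
    and e1: "\<forall>x y. A1 x y 1 = (\<Sum>i\<le>N. \<Sum>j\<le>N. c1 i j * x^i * y^j)"
    and rdef: "r = (LEAST s. 1 \<le> s \<and> (\<exists>i j. i + j + 1 = s \<and> (c0 i j \<noteq> 0 \<or> c1 i j \<noteq> 0)))"
    using am unfolding alg_mult_p2_def by blast
  define cc0 where "cc0 a b = (\<Sum>c\<le>M. C0 a b c)" for a b
  define cc1 where "cc1 a b = (\<Sum>c\<le>M. C1 a b c)" for a b
  have at1: "(\<Sum>c\<le>M. lev M C c x y * 1^c) = (\<Sum>a\<le>M. \<Sum>b\<le>M. (\<Sum>c\<le>M. C a b c) * x^a * y^b)" for C x y
  proof -
    have "(\<Sum>c\<le>M. lev M C c x y * 1^c) = (\<Sum>c\<le>M. \<Sum>a\<le>M. \<Sum>b\<le>M. C a b c * x^a * y^b)"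
      by (simp add: lev_def)
    also have "\<dots> = (\<Sum>a\<le>M. \<Sum>c\<le>M. \<Sum>b\<le>M. C a b c * x^a * y^b)" by (rule sum.swap)
    also have "\<dots> = (\<Sum>a\<le>M. \<Sum>b\<le>M. \<Sum>c\<le>M. C a b c * x^a * y^b)"
      by (rule sum.cong[OF refl], rule sum.swap)
    also have "\<dots> = (\<Sum>a\<le>M. \<Sum>b\<le>M. (\<Sum>c\<le>M. C a b c) * x^a * y^b)"
      by (simp add: sum_distrib_right)
    finally show ?thesis .
  qed
  have cc0z: "\<forall>i j. M < i \<or> M < j \<longrightarrow> cc0 i j = 0"
    unfolding cc0_def using b0 by (metis (no_types, lifting) not_le sum.neutral)
  have cc1z: "\<forall>i j. M < i \<or> M < j \<longrightarrow> cc1 i j = 0"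
    unfolding cc1_def using b1 by (metis (no_types, lifting) not_le sum.neutral)
  have c0eq: "c0 i j = cc0 i j" for i j
  proof (rule coeff_eq[of N _ M])
    show "\<forall>i j. N < i \<or> N < j \<longrightarrow> c0 i j = 0" using zN by blast
    show "\<forall>i j. M < i \<or> M < j \<longrightarrow> cc0 i j = 0" by (rule cc0z)
    show "\<forall>x y. (\<Sum>i\<le>N. \<Sum>j\<le>N. c0 i j * x ^ i * y ^ j) = (\<Sum>i\<le>M. \<Sum>j\<le>M. cc0 i j * x ^ i * y ^ j)"
    proof (intro allI)
      fix x y
      have "(\<Sum>i\<le>N. \<Sum>j\<le>N. c0 i j * x ^ i * y ^ j) = A0 x y 1" using e0 by simp
      also have "\<dots> = (\<Sum>c\<le>M. lev M C0 c x y * 1^c)" using f0 by blast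
      also have "\<dots> = (\<Sum>i\<le>M. \<Sum>j\<le>M. cc0 i j * x ^ i * y ^ j)" unfolding cc0_def by (rule at1)
      finally show "(\<Sum>i\<le>N. \<Sum>j\<le>N. c0 i j * x ^ i * y ^ j) = (\<Sum>i\<le>M. \<Sum>j\<le>M. cc0 i j * x ^ i * y ^ j)" .
    qed
  qed
  have c1eq: "c1 i j = cc1 i j" for i j
  proof (rule coeff_eq[of N _ M])
    show "\<forall>i j. N < i \<or> N < j \<longrightarrow> c1 i j = 0" using zN by blast
    show "\<forall>i j. M < i \<or> M < j \<longrightarrow> cc1 i j = 0" by (rule cc1z)
    show "\<forall>x y. (\<Sum>i\<le>N. \<Sum>j\<le>N. c1 i j * x ^ i * y ^ j) = (\<Sum>i\<le>M. \<Sum>j\<le>M. cc1 i j * x ^ i * y ^ j)"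
    proof (intro allI)
      fix x y
      have "(\<Sum>i\<le>N. \<Sum>j\<le>N. c1 i j * x ^ i * y ^ j) = A1 x y 1" using e1 by simp
      also have "\<dots> = (\<Sum>c\<le>M. lev M C1 c x y * 1^c)" using f1 by blast
      also have "\<dots> = (\<Sum>i\<le>M. \<Sum>j\<le>M. cc1 i j * x ^ i * y ^ j)" unfolding cc1_def by (rule at1)
      finally show "(\<Sum>i\<le>N. \<Sum>j\<le>N. c1 i j * x ^ i * y ^ j) = (\<Sum>i\<le>M. \<Sum>j\<le>M. cc1 i j * x ^ i * y ^ j)" .
    qed
  qed
  have back0: "C0 i j c \<noteq> 0 \<Longrightarrow> cc0 i j = C0 i j c" for i j c
  proof -
    assume nz: "C0 i j c \<noteq> 0"
    have "cc0 i j = (\<Sum>c'\<in>{c}. C0 i j c')"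
      unfolding cc0_def
    proof (rule sum.mono_neutral_right)
      show "{c} \<subseteq> {..M}" using b0[OF nz] by simp
      show "\<forall>c'\<in>{..M} - {c}. C0 i j c' = 0"
      proof
        fix c' assume c': "c' \<in> {..M} - {c}"
        show "C0 i j c' = 0"
        proof (rule ccontr)
          assume "C0 i j c' \<noteq> 0"
          then have "int i + int j + int k * int c' = d - 1" using s0 by blast
          moreover have "int i + int j + int k * int c = d - 1" using s0 nz by blast
          ultimately have "c' = c" by (rule unique_c)
          then show False using c' by simp
        qed
      qed
    qed simp
    then show ?thesis by simp
  qed
  have back1: "C1 i j c \<noteq> 0 \<Longrightarrow> cc1 i j = C1 i j c" for i j c
  proof -
    assume nz: "C1 i j c \<noteq> 0"
    have "cc1 i j = (\<Sum>c'\<in>{c}. C1 i j c')"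
      unfolding cc1_def
    proof (rule sum.mono_neutral_right)
      show "{c} \<subseteq> {..M}" using b1[OF nz] by simp
      show "\<forall>c'\<in>{..M} - {c}. C1 i j c' = 0"
      proof
        fix c' assume c': "c' \<in> {..M} - {c}"
        show "C1 i j c' = 0"
        proof (rule ccontr)
          assume "C1 i j c' \<noteq> 0"
          then have "int i + int j + int k * int c' = d - 1" using s1 by blast
          moreover have "int i + int j + int k * int c = d - 1" using s1 nz by blast
          ultimately have "c' = c" by (rule unique_c)
          then show False using c' by simp
        qed
      qed
    qed simp
    then show ?thesis by simp
  qed
  have fwd: "cc0 i j \<noteq> 0 \<or> cc1 i j \<noteq> 0 \<Longrightarrow> \<exists>c. (C0 i j c \<noteq> 0 \<or> C1 i j c \<noteq> 0) \<and> int i + int j + int k * int c = d - 1" for i j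
  proof -
    assume "cc0 i j \<noteq> 0 \<or> cc1 i j \<noteq> 0"
    then show ?thesis
    proof
      assume "cc0 i j \<noteq> 0"
      then obtain c where "C0 i j c \<noteq> 0" unfolding cc0_def using sum.not_neutral_contains_not_neutral by blast
      then show ?thesis using s0 by blast
    next
      assume "cc1 i j \<noteq> 0"
      then obtain c where "C1 i j c \<noteq> 0" unfolding cc1_def using sum.not_neutral_contains_not_neutral by blast
      then show ?thesis using s1 by blast
    qed
  qed
  define P where "P s \<longleftrightarrow> 1 \<le> s \<and> (\<exists>i j. i + j + 1 = s \<and> (cc0 i j \<noteq> 0 \<or> cc1 i j \<noteq> 0))" for s
  have rP: "r = (LEAST s. P s)" unfolding rdef P_def c0eq c1eq by simp
  have ne: "\<exists>s. P s"
  proof (rule ccontr)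
    assume "\<not> (\<exists>s. P s)"
    then have "\<forall>i j. cc0 i j = 0 \<and> cc1 i j = 0" unfolding P_def by auto
    then have z0: "C0 i j c = 0" and z1: "C1 i j c = 0" for i j c using back0 back1 by force+
    have "A1 1 t 1 = 0 \<and> A2 1 t 1 = 0" for t
    proof -
      have "A0 1 t 1 = 0" "A1 1 t 1 = 0" using f0 f1 z0 z1 by (simp_all add: lev_def)
      moreover have "1 * A0 1 t 1 + t * A1 1 t 1 + of_nat k * 1 * A2 1 t 1 = 0" using eul by blast
      ultimately show ?thesis using kpos by simp
    qed
    then have "\<forall>t\<in>UNIV. (t, 1) \<in> Z" unfolding Z_def by simp
    then show False using infinite_line[of UNIV "\<lambda>_. 1" Z] Zfin infinite_UNIV_char_0 by blast
  qed
  have levs: "P s \<Longrightarrow> \<exists>c. int s = d - int k * int c \<and> (\<exists>i j. C0 i j c \<noteq> 0 \<or> C1 i j c \<noteq> 0)" for s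
  proof -
    assume "P s"
    then obtain i j where ij: "i + j + 1 = s" "cc0 i j \<noteq> 0 \<or> cc1 i j \<noteq> 0" unfolding P_def by blast
    then obtain c where "(C0 i j c \<noteq> 0 \<or> C1 i j c \<noteq> 0)" "int i + int j + int k * int c = d - 1"
      using fwd by blast
    then show ?thesis using ij(1) by (intro exI[of _ c]) auto
  qed
  have levP: "C0 i j c \<noteq> 0 \<or> C1 i j c \<noteq> 0 \<Longrightarrow> P (i + j + 1) \<and> int (i + j + 1) = d - int k * int c" for i j c
  proof -
    assume h: "C0 i j c \<noteq> 0 \<or> C1 i j c \<noteq> 0"
    then have "cc0 i j \<noteq> 0 \<or> cc1 i j \<noteq> 0"
    proof
      assume "C0 i j c \<noteq> 0" then show ?thesis using back0 by simp
    next
      assume "C1 i j c \<noteq> 0" then show ?thesis using back1 by simp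
    qed
    moreover have "int i + int j + int k * int c = d - 1" using h s0 s1 by blast
    ultimately show ?thesis unfolding P_def by auto
  qed
  show ?thesis
  proof
    assume rk: "int r = d - int k"
    have Pr: "P r" unfolding rP using ne by (rule LeastI_ex)
    obtain c i j where c: "int r = d - int k * int c" and ij: "C0 i j c \<noteq> 0 \<or> C1 i j c \<noteq> 0"
      using levs[OF Pr] by blast
    have "int k * int c = int k * 1" using c rk by simp
    then have "c = 1" using kpos by simp
    then have g2: "\<exists>a b. C0 a b 1 \<noteq> 0 \<or> C1 a b 1 \<noteq> 0" using ij by blast
    have g1: "C0 a b c' = 0 \<and> C1 a b c' = 0" if c': "2 \<le> c'" for a b c'
    proof (rule ccontr)
      assume "\<not> (C0 a b c' = 0 \<and> C1 a b c' = 0)"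
      then have h: "P (a + b + 1)" "int (a + b + 1) = d - int k * int c'" using levP by blast+
      have "r \<le> a + b + 1" unfolding rP using h(1) by (rule Least_le)
      moreover have "int k * 2 \<le> int k * int c'" using c' by (simp add: mult_left_mono)
      ultimately show False using h(2) rk kpos by linarith
    qed
    show Good unfolding Good_def using g1 g2 by blast
  next
    assume G: Good
    then obtain a b where ab: "C0 a b 1 \<noteq> 0 \<or> C1 a b 1 \<noteq> 0" unfolding Good_def by blast
    have h: "P (a + b + 1)" "int (a + b + 1) = d - int k" using levP[OF ab] by auto
    have "(LEAST s. P s) = a + b + 1"
    proof (rule Least_equality)
      show "P (a + b + 1)" by (rule h(1))
      fix s assume "P s"
      then obtain c i j where c: "int s = d - int k * int c" and ij: "C0 i j c \<noteq> 0 \<or> C1 i j c \<noteq> 0"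
        using levs by blast
      have "\<not> 2 \<le> c"
      proof
        assume "2 \<le> c"
        then have "C0 i j c = 0 \<and> C1 i j c = 0" using G unfolding Good_def by blast
        then show False using ij by simp
      qed
      then have "c = 0 \<or> c = 1" by linarith
      then have "int k * int c \<le> int k" by auto
      then show "a + b + 1 \<le> s" using c h(2) by linarith
    qed
    then show "int r = d - int k" using h(2) rP by simp
  qed
qed

end

lemma poly2_lev: "poly2 (\<lambda>x y. lev M C c 1 x)"
  unfolding lev_def by (intro poly2_intros finite_atMost)

lemma poly3_form_lev: "poly3 (\<lambda>x y z. \<Sum>c\<le>M. lev M C c x y * z^c)"
  unfolding lev_def by (intro poly3_intros finite_atMost)

lemma cont_form_lev:
  assumes "continuous_on UNIV g" "continuous_on UNIV h"
  shows "continuous_on UNIV (\<lambda>u. \<Sum>c\<le>M. lev M C c (g u) (h u) * (z::complex)^c)"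
  unfolding lev_def by (intro continuous_intros assms)

context folset
begin

lemma poly2_chart: "poly2 (\<lambda>t z. \<Sum>c\<le>M. lev M C c 1 t * z^c)"
  by (intro poly2_intros finite_atMost poly2_lev)

lemma poly2_A1: "poly2 (\<lambda>t z. A1 1 t z)" using poly2_chart f1 by simp
lemma poly2_A2: "poly2 (\<lambda>t z. A2 1 t z)" using poly2_chart f2 by simp
lemma poly3_A0: "poly3 A0"
proof -
  have e: "A0 = (\<lambda>x y z. \<Sum>c\<le>M. lev M C0 c x y * z^c)" using f0 by (intro ext) blast
  show ?thesis unfolding e by (rule poly3_form_lev)
qed
lemma poly3_A1: "poly3 A1"
proof -
  have e: "A1 = (\<lambda>x y z. \<Sum>c\<le>M. lev M C1 c x y * z^c)" using f1 by (intro ext) blast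
  show ?thesis unfolding e by (rule poly3_form_lev)
qed
lemma poly3_A2: "poly3 A2"
proof -
  have e: "A2 = (\<lambda>x y z. \<Sum>c\<le>M. lev M C2 c x y * z^c)" using f2 by (intro ext) blast
  show ?thesis unfolding e by (rule poly3_form_lev)
qed

lemma levz0: "(\<And>a b. C0 a b c = 0) \<Longrightarrow> lev M C0 c x y = 0" by (simp add: lev_def)
lemma levz1: "(\<And>a b. C1 a b c = 0) \<Longrightarrow> lev M C1 c x y = 0" by (simp add: lev_def)
lemma levz2: "(\<And>a b. C2 a b c = 0) \<Longrightarrow> lev M C2 c x y = 0" by (simp add: lev_def)

lemma good_L2:
  assumes G: Good and c: "1 \<le> c" shows "lev M C2 c x y = 0"
proof -
  obtain c' where c': "c = Suc c'" using c by (cases c) auto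
  have "C0 a b (Suc c) = 0" "C1 a b (Suc c) = 0" for a b using G c unfolding Good_def by auto
  then have "lev M C0 (Suc c) x y = 0" "lev M C1 (Suc c) x y = 0" using levz0 levz1 by blast+
  then have "of_nat k * lev M C2 c x y = 0" using eulS[of x c y] by simp
  then show ?thesis using kpos by simp
qed

lemma good_M: assumes G: Good shows "1 \<le> M"
proof -
  obtain a b where "C0 a b 1 \<noteq> 0 \<or> C1 a b 1 \<noteq> 0" using G unfolding Good_def by blast
  then show ?thesis using b0 b1 by blast
qed

lemma good_A2: assumes G: Good shows "A2 x y z = lev M C2 0 x y"
proof -
  have "A2 x y z = (\<Sum>c\<le>M. lev M C2 c x y * z^c)" using f2 by blast
  also have "\<dots> = lev M C2 0 x y" by (rule sum_low0) (use good_L2[OF G] in auto)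
  finally show ?thesis .
qed

lemma good_A1: assumes G: Good shows "A1 x y z = lev M C1 0 x y + lev M C1 1 x y * z"
proof -
  have "A1 x y z = (\<Sum>c\<le>M. lev M C1 c x y * z^c)" using f1 by blast
  also have "\<dots> = lev M C1 0 x y + lev M C1 1 x y * z"
  proof (rule sum_low1[OF good_M[OF G]])
    fix c :: nat assume "2 \<le> c"
    then show "lev M C1 c x y = 0" using G levz1 unfolding Good_def by blast
  qed
  finally show ?thesis .
qed

lemma good_h2: assumes G: Good shows "\<exists>t. lev M C2 0 1 t \<noteq> 0"
proof (rule ccontr)
  assume "\<not> (\<exists>t. lev M C2 0 1 t \<noteq> 0)"
  then have h2: "\<And>t. lev M C2 0 1 t = 0" by blast
  show False
  proof (cases "\<exists>t0. lev M C1 1 1 t0 \<noteq> 0")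
    case True
    then obtain t0 where "lev M C1 1 1 t0 \<noteq> 0" by blast
    then have R: "finite {t. lev M C1 1 1 t = 0}" by (rule lev_finite_roots)
    have "\<forall>t\<in>UNIV - {t. lev M C1 1 1 t = 0}. (t, - lev M C1 0 1 t / lev M C1 1 1 t) \<in> Z"
      unfolding Z_def using good_A1[OF G] good_A2[OF G] h2 by auto
    then have "infinite Z" by (rule infinite_line) (rule cofinite_infinite[OF R])
    then show False using Zfin by blast
  next
    case False
    then have z1: "\<forall>t. lev M C1 1 1 t = 0" by blast
    have "\<forall>t. lev M C0 1 1 t = 0"
    proof
      fix t
      show "lev M C0 1 1 t = 0" using eulS[of 1 0 t] z1 h2 by simp
    qed
    then have "C0 a b 1 = 0" "C1 a b 1 = 0" for a b using zero_lev0 zero_lev1 z1 by blast+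
    then show False using G unfolding Good_def by blast
  qed
qed

end

context folset
begin
lemma good_riccati_E: assumes G: Good shows "riccati_G A1 A2 \<and> E_invariant A1 A2"
proof -
  define S2 where "S2 = {t. lev M C2 0 1 t = 0}"
  have S2: "finite S2" unfolding S2_def using good_h2[OF G] lev_finite_roots by blast
  obtain t1 where t1: "t1 \<notin> S2" using exists_notin[OF S2] by blast
  define a where "a t = lev M C1 0 1 t" for t
  define b where "b t = lev M C1 1 1 t" for t
  define h where "h t = lev M C2 0 1 t" for t
  have A1c: "A1 1 t z = a t + b t * z" for t z unfolding a_def b_def by (rule good_A1[OF G])
  have A2c: "A2 1 t z = h t" for t z unfolding h_def by (rule good_A2[OF G])
  have ab: "a t \<noteq> 0 \<or> b t \<noteq> 0" if "t \<in> S2" for t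
  proof (rule ccontr)
    assume "\<not> (a t \<noteq> 0 \<or> b t \<noteq> 0)"
    then have "\<forall>z. (t, z) \<in> Z" using that unfolding Z_def S2_def by (simp add: A1c A2c h_def)
    then have "infinite Z" by (rule infinite_vline)
    then show False using Zfin by simp
  qed
  define P' where "P' t w = w^2 * a t + w * b t" for t w
  define Q' where "Q' t w = - h t" for t w :: complex
  have pP': "poly2 P'" unfolding P'_def a_def b_def by (intro poly2_intros poly2_lev)
  have pQ': "poly2 Q'" unfolding Q'_def h_def by (intro poly2_intros poly2_lev)
  have nz: "\<exists>t v. P' t v \<noteq> 0 \<or> Q' t v \<noteq> 0" using t1 unfolding Q'_def S2_def h_def by auto
  have finW: "finite {(t, v). P' t v = 0 \<and> Q' t v = 0}"
  proof (rule finite_subset)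
    show "{(t, v). P' t v = 0 \<and> Q' t v = 0} \<subseteq> Sigma S2 (\<lambda>t. {0, - b t / a t})"
    proof clarify
      fix t v assume h1: "P' t v = 0" "Q' t v = 0"
      have tS: "t \<in> S2" using h1(2) unfolding Q'_def S2_def h_def by simp
      have "v * (v * a t + b t) = 0" using h1(1) unfolding P'_def by (simp add: power2_eq_square algebra_simps)
      then have "v = 0 \<or> v * a t + b t = 0" by simp
      then have "v \<in> {0, - b t / a t}"
      proof
        assume v: "v * a t + b t = 0"
        show ?thesis
        proof (cases "a t = 0")
          case True
          then have "b t \<noteq> 0" using ab[OF tS] by simp
          then show ?thesis using v True by simp
        next
          case False
          then have "v = - b t / a t" using v by (simp add: field_simps add_eq_0_iff)
          then show ?thesis by simp
        qed
      qed simp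
      then show "t \<in> S2 \<and> v \<in> {0, - b t / a t}" using tS by simp
    qed
    show "finite (Sigma S2 (\<lambda>t. {0, - b t / a t}))" using S2 by auto
  qed
  have repw: "G_rep_w A1 A2 P' Q'"
    unfolding G_rep_w_def sat_rep_def
  proof (intro conjI pP' pQ' nz finW allI impI)
    fix t w :: complex assume "(t, w) \<in> {(t, w). w \<noteq> (0::complex)}"
    then have w: "w \<noteq> 0" by simp
    show "A1 1 t (1 / w) * Q' t w = - A2 1 t (1 / w) / w\<^sup>2 * P' t w"
      unfolding A1c A2c P'_def Q'_def using w by (simp add: field_simps power2_eq_square)
  qed
  have repz: "G_rep_z A1 A2 (\<lambda>t z. A1 1 t z) (\<lambda>t z. A2 1 t z)"
    unfolding G_rep_z_def sat_rep_def
  proof (intro conjI poly2_A1 poly2_A2 allI impI)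
    show "\<exists>t v. A1 1 t v \<noteq> 0 \<or> A2 1 t v \<noteq> 0" using t1 unfolding S2_def by (auto simp: A2c h_def)
    show "finite {(t, v). A1 1 t v = 0 \<and> A2 1 t v = 0}" using Zfin unfolding Z_def .
    fix t v show "A1 1 t v * A2 1 t v = A2 1 t v * A1 1 t v" by (simp add: mult.commute)
  qed
  have ric: "riccati_G A1 A2"
    unfolding riccati_G_def
  proof (intro exI conjI)
    show "G_rep_z A1 A2 (\<lambda>t z. A1 1 t z) (\<lambda>t z. A2 1 t z)" by (rule repz)
    show "G_rep_w A1 A2 P' Q'" by (rule repw)
    show "finite S2" by (rule S2)
    show "\<forall>c. c \<notin> S2 \<longrightarrow> (\<forall>z. A2 1 c z \<noteq> 0) \<and> (\<forall>w. Q' c w \<noteq> 0)"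
      unfolding S2_def Q'_def by (simp add: A2c h_def)
  qed
  have Einv: "E_invariant A1 A2"
    unfolding E_invariant_def
  proof (intro exI conjI)
    show "G_rep_w A1 A2 P' Q'" by (rule repw)
    show "invariant_curve2 P' Q' (\<lambda>t w. w)"
      unfolding invariant_curve2_def
    proof (intro exI conjI allI)
      show "poly2 (\<lambda>t w. w * a t + b t)" unfolding a_def b_def by (intro poly2_intros poly2_lev)
      fix t w
      show "P' t w * deriv (\<lambda>s. s) w - Q' t w * deriv (\<lambda>s. w) t = w * (w * a t + b t)"
        unfolding P'_def by (simp add: power2_eq_square algebra_simps)
    qed
  qed
  show ?thesis using ric Einv by blast
qed

end

context folset
begin

lemma good_line: assumes G: Good shows "has_invariant_line A0 A1 A2"
proof -
  obtain a0 b0' where ab: "C0 a0 b0' 1 \<noteq> 0 \<or> C1 a0 b0' 1 \<noteq> 0" using G unfolding Good_def by blast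
  have "int a0 + int b0' + int k * 1 = d - 1" using ab s0 s1 by force
  then have dk: "d - int k \<ge> 1" by linarith
  define n where "n = nat (d - int k)"
  have n1: "1 \<le> n" using dk unfolding n_def by linarith
  have supp: "\<forall>a b. C2 a b 0 \<noteq> 0 \<longrightarrow> a + b = n"
  proof (intro allI impI)
    fix a b assume "C2 a b 0 \<noteq> 0"
    then have "int a + int b + int k * 0 = d - int k" using s2 by force
    then show "a + b = n" unfolding n_def by linarith
  qed
  have A2e: "A2 x y z = lev M C2 0 x y" for x y z by (rule good_A2[OF G])
  show ?thesis
  proof (cases "C2 0 n 0 = 0")
    case True
    have A20: "A2 0 y z = 0" for y z
      unfolding A2e lev_def
    proof (intro sum.neutral ballI)
      fix a b
      show "C2 a b 0 * 0 ^ a * y ^ b = 0"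
      proof (cases "a = 0")
        case a0: True
        show ?thesis
        proof (cases "C2 a b 0 = 0")
          case False
          then have "b = n" using supp a0 by force
          then show ?thesis using True a0 by simp
        qed simp
      qed simp
    qed
    have A10: "A1 0 y z = 0" for y z
    proof -
      have e: "y * A1 0 y z = 0" for y using eul[rule_format, of 0 y z] A20 by simp
      have c: "continuous_on UNIV (\<lambda>y. A1 0 y z)"
        unfolding f1[rule_format] by (intro cont_form_lev continuous_intros)
      have "(\<lambda>y. A1 0 y z) 0 = 0" by (rule cont_at0[OF c]) (metis e mult_eq_0_iff)
      then show ?thesis using e[of y] by (cases "y = 0") auto
    qed
    obtain G1 where G1: "poly3 G1" "\<forall>x y z. A1 x y z = A1 0 y z + x * G1 x y z"
      using div_x[OF poly3_A1] by blast
    obtain G2 where G2: "poly3 G2" "\<forall>x y z. A2 x y z = A2 0 y z + x * G2 x y z"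
      using div_x[OF poly3_A2] by blast
    show ?thesis
      unfolding has_invariant_line_def
    proof (intro exI conjI)
      show "(1::complex, 0::complex) \<noteq> (0, 0)" by simp
      show "invariant_curve A0 A1 A2 (\<lambda>x0 x1 x2. 1 * x0 + 0 * x1)"
        unfolding invariant_curve_def pd3_line
      proof (intro conjI)
        show "poly3 (\<lambda>x0 x1 x2. 1 * x0 + 0 * x1)" by (intro poly3_intros)
        show "\<exists>x y z. 1 * x + 0 * y \<noteq> (0::complex)" by (intro exI[of _ 1]) simp
      next
        show "\<exists>T01 T02 T12. poly3 T01 \<and> poly3 T02 \<and> poly3 T12 \<and> (\<forall>x y z.
       A0 x y z * 0 - A1 x y z * 1 = (1 * x + 0 * y) * T01 x y z \<and>
       A0 x y z * 0 - A2 x y z * 1 = (1 * x + 0 * y) * T02 x y z \<and>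
       A1 x y z * 0 - A2 x y z * 0 = (1 * x + 0 * y) * T12 x y z)"
      proof (rule exI[of _ "\<lambda>x y z. - G1 x y z"], rule exI[of _ "\<lambda>x y z. - G2 x y z"], rule exI[of _ "\<lambda>x y z. 0"], intro conjI allI)
        show "poly3 (\<lambda>x y z. - G1 x y z)" by (intro poly3_intros G1(1))
        show "poly3 (\<lambda>x y z. - G2 x y z)" by (intro poly3_intros G2(1))
        show "poly3 (\<lambda>x y z. 0)" by (rule poly3_const)
        fix x y z
        show "A0 x y z * 0 - A1 x y z * 1 = (1 * x + 0 * y) * - G1 x y z"
          using G1(2) A10 by simp
        show "A0 x y z * 0 - A2 x y z * 1 = (1 * x + 0 * y) * - G2 x y z"
          using G2(2) A20 by simp
        show "A1 x y z * 0 - A2 x y z * 0 = (1 * x + 0 * y) * 0" by simp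
      qed
      qed
    qed
  next
    case False
    have nM: "n \<le> M" using b2[OF False] by simp
    define q where "q b = (\<Sum>a\<le>M. C2 a b 0)" for b
    have qn: "q n = C2 0 n 0"
      unfolding q_def
    proof (rule trans[OF sum.mono_neutral_right[of "{..M}" "{0}"]])
      show "\<forall>i\<in>{..M} - {0}. C2 i n 0 = 0" using supp by force
    qed auto
    obtain t0 where t0: "(\<Sum>i\<le>M. q i * t0^i) = 0"
    proof (rule fundamental_theorem_of_algebra[of q M])
      show "q 0 = 0 \<or> (\<exists>i\<in>{1..M}. q i \<noteq> 0)" using qn False n1 nM by force
    qed
    have h0: "lev M C2 0 1 t0 = 0" using t0 unfolding lev_1 q_def .
    have A2l: "A2 x (t0 * x) z = 0" for x z
    proof -
      have "A2 x (t0 * x) z = lev M C2 0 (x * 1) (x * t0)" by (simp add: A2e mult.commute)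
      also have "\<dots> = x ^ n * lev M C2 0 1 t0" by (rule hom_scale[where C=C2 and c=0, OF supp])
      finally show ?thesis using h0 by simp
    qed
    define F where "F x y z = A0 x y z + t0 * A1 x y z" for x y z
    have pF: "poly3 F" unfolding F_def by (intro poly3_intros poly3_A0 poly3_A1)
    have Fl: "F x (t0 * x) z = 0" for x z
    proof -
      have e: "x * F x (t0 * x) z = 0" for x
        using eul[rule_format, of x "t0 * x" z] A2l[of x z] unfolding F_def by (simp add: algebra_simps)
      have c: "continuous_on UNIV (\<lambda>x. F x (t0 * x) z)"
        unfolding F_def f0[rule_format] f1[rule_format]
        by (intro cont_form_lev continuous_intros)
      have "(\<lambda>x. F x (t0 * x) z) 0 = 0" by (rule cont_at0[OF c]) (metis e mult_eq_0_iff)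
      then show ?thesis using e[of x] by (cases "x = 0") auto
    qed
    obtain GF where GF: "poly3 GF" "\<forall>x y z. F x y z = F x (t0 * x) z + (y - t0 * x) * GF x y z"
      using div_line[OF pF] by blast
    obtain G2 where G2: "poly3 G2" "\<forall>x y z. A2 x y z = A2 x (t0 * x) z + (y - t0 * x) * G2 x y z"
      using div_line[OF poly3_A2] by blast
    show ?thesis
      unfolding has_invariant_line_def
    proof (intro exI conjI)
      show "(- t0, 1::complex) \<noteq> (0, 0)" by simp
      show "invariant_curve A0 A1 A2 (\<lambda>x0 x1 x2. (- t0) * x0 + 1 * x1)"
        unfolding invariant_curve_def pd3_line
      proof (intro conjI)
        show "poly3 (\<lambda>x0 x1 x2. (- t0) * x0 + 1 * x1)" by (intro poly3_intros)
        show "\<exists>x y z. (- t0) * x + 1 * y \<noteq> (0::complex)" by (intro exI[of _ 0] exI[of _ 1]) simp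
      next
        show "\<exists>T01 T02 T12. poly3 T01 \<and> poly3 T02 \<and> poly3 T12 \<and> (\<forall>x y z.
       A0 x y z * 1 - A1 x y z * - t0 = (- t0 * x + 1 * y) * T01 x y z \<and>
       A0 x y z * 0 - A2 x y z * - t0 = (- t0 * x + 1 * y) * T02 x y z \<and>
       A1 x y z * 0 - A2 x y z * 1 = (- t0 * x + 1 * y) * T12 x y z)"
      proof (rule exI[of _ GF], rule exI[of _ "\<lambda>x y z. t0 * G2 x y z"], rule exI[of _ "\<lambda>x y z. - G2 x y z"], intro conjI allI)
        show "poly3 GF" by (rule GF(1))
        show "poly3 (\<lambda>x y z. t0 * G2 x y z)" by (intro poly3_intros G2(1))
        show "poly3 (\<lambda>x y z. - G2 x y z)" by (intro poly3_intros G2(1))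
        fix x y z
        show "A0 x y z * 1 - A1 x y z * - t0 = (- t0 * x + 1 * y) * GF x y z"
          using GF(2)[rule_format, of x y z] Fl[of x z] unfolding F_def by (simp add: algebra_simps)
        have a2: "A2 x y z = (y - t0 * x) * G2 x y z" using G2(2)[rule_format, of x y z] A2l[of x z] by simp
        show "A0 x y z * 0 - A2 x y z * - t0 = (- t0 * x + 1 * y) * (t0 * G2 x y z)"
          unfolding a2 by (simp add: algebra_simps)
        show "A1 x y z * 0 - A2 x y z * 1 = (- t0 * x + 1 * y) * - G2 x y z"
          unfolding a2 by (simp add: algebra_simps)
      qed
      qed
    qed
  qed
qed

end

lemma pow_inv_mult:
  fixes w :: complex
  assumes "w \<noteq> 0" "c \<le> m"
  shows "(1 / w) ^ c * w ^ m = w ^ (m - c)"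
  using assms by (simp add: power_diff power_one_over field_simps)

context folset
begin

lemma back_good: assumes R: "riccati_G A1 A2" and E: "E_invariant A1 A2" shows Good
proof -
  from R obtain P Q P' Q' S where rz: "G_rep_z A1 A2 P Q" and rw': "G_rep_w A1 A2 P' Q'" and S: "finite S"
    and SQ: "\<forall>c. c \<notin> S \<longrightarrow> (\<forall>z. Q c z \<noteq> 0) \<and> (\<forall>w. Q' c w \<noteq> 0)"
    unfolding riccati_G_def by (elim exE conjE) (rule that)
  have hprop: "A1 1 t z * Q t z = A2 1 t z * P t z" for t z
    using rz unfolding G_rep_z_def sat_rep_def by blast
  define X where "X = S \<union> fst ` Z"
  have X: "finite X" unfolding X_def using S Zfin by simp
  have nz2: "A2 1 t z \<noteq> 0" if t: "t \<notin> X" for t z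
  proof
    assume a2: "A2 1 t z = 0"
    have "Q t z \<noteq> 0" using SQ t unfolding X_def by blast
    then have "A1 1 t z = 0" using hprop[of t z] a2 by simp
    then have "(t, z) \<in> Z" unfolding Z_def using a2 by simp
    then show False using t unfolding X_def by force
  qed
  have hi2: "lev M C2 c 1 t = 0" if t: "t \<notin> X" and c: "1 \<le> c" "c \<le> M" for t c
  proof -
    have "\<not> (lev M C2 0 1 t = 0 \<or> (\<exists>i\<in>{1..M}. lev M C2 i 1 t \<noteq> 0))"
    proof
      assume "lev M C2 0 1 t = 0 \<or> (\<exists>i\<in>{1..M}. lev M C2 i 1 t \<noteq> 0)"
      then obtain z where "(\<Sum>i\<le>M. lev M C2 i 1 t * z^i) = 0"
        by (rule fundamental_theorem_of_algebra)
      then have "A2 1 t z = 0" using f2 by simp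
      then show False using nz2[OF t] by blast
    qed
    then show ?thesis using c by auto
  qed
  have C2z: "C2 a b c = 0" if c: "1 \<le> c" for a b c
  proof (cases "c \<le> M")
    case True
    have "UNIV - X \<subseteq> {t. lev M C2 c 1 t = 0}" using hi2 c True by blast
    then have "infinite {t. lev M C2 c 1 t = 0}" using cofinite_infinite[OF X] finite_subset by blast
    then have "\<forall>t. lev M C2 c 1 t = 0" using lev_roots by blast
    then show ?thesis by (rule zero_lev2)
  next
    case False
    then show ?thesis using b2 by fastforce
  qed
  have L2: "lev M C2 c x y = 0" if "1 \<le> c" for c x y using levz2 C2z that by blast
  have A2e: "A2 x y z = lev M C2 0 x y" for x y z
  proof -
    have "A2 x y z = (\<Sum>c\<le>M. lev M C2 c x y * z^c)" using f2 by blast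
    also have "\<dots> = lev M C2 0 x y" by (rule sum_low0) (use L2 in auto)
    finally show ?thesis .
  qed
  have h2: "\<exists>t. lev M C2 0 1 t \<noteq> 0"
  proof (rule ccontr)
    assume "\<not> (\<exists>t. lev M C2 0 1 t \<noteq> 0)"
    then have z: "A2 1 t z = 0" for t z using A2e by simp
    obtain t1 where t1: "t1 \<notin> S" using exists_notin[OF S] by blast
    have "\<forall>z. (t1, z) \<in> Z"
    proof
      fix z
      have "Q t1 z \<noteq> 0" using SQ t1 by blast
      then have "A1 1 t1 z = 0" using hprop[of t1 z] z by simp
      then show "(t1, z) \<in> Z" unfolding Z_def using z by simp
    qed
    then have "infinite Z" by (rule infinite_vline)
    then show False using Zfin by simp
  qed
  obtain PE QE where rw: "G_rep_w A1 A2 PE QE" and ic: "invariant_curve2 PE QE (\<lambda>t w. w)"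
    using E unfolding E_invariant_def by blast
  have pQE: "poly2 QE" and finE: "finite {(t, v). PE t v = 0 \<and> QE t v = 0}"
    and propw: "\<And>t w. w \<noteq> 0 \<Longrightarrow> A1 1 t (1 / w) * QE t w = - A2 1 t (1 / w) / w^2 * PE t w"
    using rw unfolding G_rep_w_def sat_rep_def by auto
  obtain T where pT: "poly2 T" and PT: "\<And>t w. PE t w * deriv (\<lambda>s. s) w - QE t w * deriv (\<lambda>s. w) t = w * T t w"
    using ic unfolding invariant_curve2_def by blast
  have PE: "PE t w = w * T t w" for t w using PT[of t w] by simp
  have L1: "\<forall>t. lev M C1 c 1 t = 0" if c: "2 \<le> c" for c
  proof (rule ccontr)
    assume bad: "\<not> (\<forall>t. lev M C1 c 1 t = 0)"
    define K where "K = {c. 2 \<le> c \<and> c \<le> M \<and> (\<exists>t. lev M C1 c 1 t \<noteq> 0)}"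
    have cM: "c \<le> M"
    proof (rule ccontr)
      assume "\<not> c \<le> M"
      then have "lev M C1 c x y = 0" for x y using lev_beyond[OF bb1] by simp
      then show False using bad by simp
    qed
    have Kne: "K \<noteq> {}" unfolding K_def using c cM bad by blast
    have Kfin: "finite K" unfolding K_def by simp
    define m where "m = Max K"
    have mK: "m \<in> K" unfolding m_def using Kne Kfin by simp
    have m2: "2 \<le> m" "m \<le> M" using mK unfolding K_def by auto
    have above: "lev M C1 c' 1 t = 0" if "m < c'" for c' t
    proof (cases "c' \<le> M")
      case True
      have "c' \<notin> K" using that Kfin m_def by (metis Max_ge leD)
      then show ?thesis using True that m2 unfolding K_def by auto
    next
      case False
      then show ?thesis using lev_beyond[OF bb1] by simp
    qed
    define h where "h c t = lev M C1 c 1 t" for c t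
    define h2 where "h2 t = lev M C2 0 1 t" for t
    have key: "h m t * QE t 0 = 0" for t
    proof -
      define phi where "phi w = (\<Sum>c\<le>m. h c t * w^(m - c)) * QE t w + h2 t * T t w * w^(m - 1)" for w
      have cphi: "continuous_on UNIV phi"
        unfolding phi_def using poly2_cont2[OF pQE] poly2_cont2[OF pT]
        by (intro continuous_intros) auto
      have "phi w = 0" if w: "w \<noteq> 0" for w
      proof -
        have s1: "A1 1 t (1 / w) = (\<Sum>c\<le>m. h c t * (1/w)^c)"
        proof -
          have "A1 1 t (1 / w) = (\<Sum>c\<le>M. h c t * (1/w)^c)" using f1 unfolding h_def by blast
          also have "\<dots> = (\<Sum>c\<le>m. h c t * (1/w)^c)"
            by (rule sum.mono_neutral_right) (use m2 above in \<open>auto simp: h_def\<close>)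
          finally show ?thesis .
        qed
        have s2: "A1 1 t (1 / w) * w^m = (\<Sum>c\<le>m. h c t * w^(m - c))"
          unfolding s1 sum_distrib_right
          by (rule sum.cong[OF refl]) (simp add: pow_inv_mult[OF w] mult.assoc)
        have e: "A1 1 t (1 / w) * QE t w = - h2 t * T t w / w"
          using propw[OF w] unfolding PE A2e h2_def using w by (simp add: power2_eq_square field_simps)
        have "(A1 1 t (1 / w) * QE t w) * w^m = - h2 t * T t w * w^(m - 1)"
        proof -
          have "w^m = w * w^(m - 1)" using m2 by (simp add: power_eq_if)
          then show ?thesis unfolding e using w by (simp add: field_simps)
        qed
        then have "(A1 1 t (1 / w) * w^m) * QE t w = - h2 t * T t w * w^(m - 1)" by (simp add: mult_ac)
        then show ?thesis unfolding phi_def s2 by simp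
      qed
      then have "phi 0 = 0" using cont_at0[OF cphi] by blast
      moreover have "(\<Sum>c\<le>m. h c t * 0^(m - c)) = h m t"
      proof -
        have "(\<Sum>c\<le>m. h c t * 0^(m - c)) = (\<Sum>c\<in>{m}. h c t * 0^(m - c))"
          by (rule sum.mono_neutral_right) auto
        then show ?thesis by simp
      qed
      moreover have "m - 1 \<noteq> 0" using m2 by simp
      then have "(0::complex)^(m - 1) = 0" by (simp add: power_0_left)
      ultimately show ?thesis unfolding phi_def by (simp del: One_nat_def)
    qed
    obtain t0 where "h m t0 \<noteq> 0" using mK unfolding K_def h_def by blast
    then have R0: "finite {t. h m t = 0}" unfolding h_def by (rule lev_finite_roots)
    have "\<forall>t\<in>UNIV - {t. h m t = 0}. (t, 0) \<in> {(t, v). PE t v = 0 \<and> QE t v = 0}"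
      using key PE by auto
    then have "infinite {(t, v). PE t v = 0 \<and> QE t v = 0}"
      by (rule infinite_line[where f="\<lambda>_. 0"]) (rule cofinite_infinite[OF R0])
    then show False using finE by simp
  qed
  have C1z: "C1 a b c = 0" if "2 \<le> c" for a b c using L1[OF that] zero_lev1 by blast
  have C0z: "C0 a b c = 0" if c: "2 \<le> c" for a b c
  proof -
    obtain c' where c': "c = Suc c'" "1 \<le> c'" using c by (cases c) auto
    have "\<forall>t. lev M C0 c 1 t = 0"
    proof
      fix t
      have "lev M C1 c 1 t = 0" using L1[OF c] by blast
      moreover have "lev M C2 c' 1 t = 0" using L2[OF c'(2)] .
      ultimately show "lev M C0 c 1 t = 0" using eulS[of 1 c' t] c'(1) by simp
    qed
    then show ?thesis by (rule zero_lev0)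
  qed
  have lev1: "\<exists>a b. C0 a b 1 \<noteq> 0 \<or> C1 a b 1 \<noteq> 0"
  proof (rule ccontr)
    assume "\<not> (\<exists>a b. C0 a b 1 \<noteq> 0 \<or> C1 a b 1 \<noteq> 0)"
    then have "lev M C0 1 x y = 0" "lev M C1 1 x y = 0" for x y using levz0 levz1 by auto
    then have "of_nat k * lev M C2 0 1 t = 0" for t using eulS[of 1 0 t] by simp
    then have "lev M C2 0 1 t = 0" for t using kpos by simp
    then show False using h2 by blast
  qed
  show Good unfolding Good_def using C0z C1z lev1 by blast
qed

end

theorem corollary3p4:
  fixes k :: nat and d :: int and r :: nat and A0 A1 A2 :: cfun3
  assumes "k \<ge> 2"
    and "foliation_P11k k d A0 A1 A2"
    and "saturated_fol k A0 A1 A2"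
    and "alg_mult_p2 A0 A1 r"
  shows "((riccati_G A1 A2 \<and> E_invariant A1 A2) \<longleftrightarrow> int r = d - int k) \<and>
         (int r = d - int k \<longrightarrow> has_invariant_line A0 A1 A2)"
proof -
  have nz: "\<exists>x y z. A0 x y z \<noteq> 0 \<or> A1 x y z \<noteq> 0 \<or> A2 x y z \<noteq> 0"
    and q0: "qhom k (d - 1) A0" and q1: "qhom k (d - 1) A1" and q2: "qhom k (d - int k) A2"
    and eul: "\<forall>x y z. x * A0 x y z + y * A1 x y z + of_nat k * z * A2 x y z = 0"
    using assms(2) unfolding foliation_P11k_def by blast+
  have k1: "k \<ge> 1" using assms(1) by simp
  define M where "M = nat d"
  have e1: "d - 1 \<le> int M" unfolding M_def by linarith
  have e2: "d - int k \<le> int M" unfolding M_def by linarith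
  obtain C0 where s0: "\<forall>a b c. C0 a b c \<noteq> 0 \<longrightarrow> int a + int b + int k * int c = d - 1"
    and f0: "\<forall>x y z. A0 x y z = (\<Sum>c\<le>M. lev M C0 c x y * z^c)"
    using qhom_box[OF q0 k1 e1] by blast
  obtain C1 where s1: "\<forall>a b c. C1 a b c \<noteq> 0 \<longrightarrow> int a + int b + int k * int c = d - 1"
    and f1: "\<forall>x y z. A1 x y z = (\<Sum>c\<le>M. lev M C1 c x y * z^c)"
    using qhom_box[OF q1 k1 e1] by blast
  obtain C2 where s2: "\<forall>a b c. C2 a b c \<noteq> 0 \<longrightarrow> int a + int b + int k * int c = d - int k"
    and f2: "\<forall>x y z. A2 x y z = (\<Sum>c\<le>M. lev M C2 c x y * z^c)"
    using qhom_box[OF q2 k1 e2] by blast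
  interpret fs: folset k d A0 A1 A2 M C0 C1 C2
    by (rule folset.intro) (use assms(1) nz eul assms(3) f0 f1 f2 s0 s1 s2 M_def in auto)
  have ri: "int r = d - int k \<longleftrightarrow> fs.Good" by (rule fs.r_iff[OF assms(4)])
  show ?thesis
    using ri fs.good_riccati_E fs.back_good fs.good_line by blast
qed

end
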